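(* Fix integers $r\ge 3$ and $k\ge 2$. Let $T_1\ge 2$ be an integer and let $H_1$ be an $r$-graph with vertex set $A^*_{r-1}\cup\{v^r_1\}$ which is $(e_i)_{i=0}^{T_1}$-sequential for a sequence of $r$-sets $(e_i)_{i=0}^{T_1}$ with $v_1^r\in e_i$ for all $i\in[0,T_1]$. Write $e_i^-=e_i\setminus\{v_1^r\}$. For each $j\in[2,2k-1]$, let $H_{2j-1}$ be the $r$-graph obtained from $H_1\setminus\{e_0\}$ by replacing the vertex $v_1^r$ by $v^r_{2j-1}$. For each $j\in[1,k-1]$, let \[H_{4j-2}=\{e\subseteq \{v_{4j-3}^r, v^r_{4j-2}, v^r_{4j-1}\}\cup e_{T_1}^- : |e|=r,\ \{v_{4j-3}^r, v^r_{4j-1}\}\not\subseteq e,\ e_{T_1}^-\not\subseteq e\},\] \[H_{4j}=\{e\subseteq \{v_{4j-1}^r, v^r_{4j}, v^r_{4j+1}\}\cup e_0^- : |e|=r,\ \{v_{4j-1}^r, v^r_{4j+1}\}\not\subseteq e,\ e_0^-\not\subseteq e\}.\] Let $H=\bigcup_{j=1}^{4k-3}H_j$, an $r$-graph with vertex set $A_r^*$. Then, for $T=(2k-1)T_1+4(k-1)$, there exists a sequence of $r$-sets $(e_i)_{i=0}^T$ extending $(e_i)_{i=0}^{T_1}$ such that $H$ is $(e_i)_{i=0}^T$-sequential.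
   Context: Fix a positive integer $k$. For every integer $i\ge1$ let $A_i=\{v_1^i,v_2^i,\dots,v_{4k-3}^i\}$ (these sets being pairwise disjoint) and $A_i^*=\bigcup_{j=1}^iA_j$. An $r$-graph is an $r$-uniform hypergraph identified with its edge set; $F_r=K^r_{r+1}$ is the complete $r$-graph on $r+1$ vertices. For an $r$-graph $G_0$ on a vertex set $V$, the $F_r$-bootstrap process in the complete $r$-graph on $V$ is: $G_i=G_{i-1}\cup\{e : e \text{ an } r\text{-subset of } V,\ \exists\, w\in V\setminus e \text{ such that } e\notin G_{i-1} \text{ and every other } r\text{-subset of } e\cup\{w\} \text{ lies in } G_{i-1}\}$ for $i\ge1$; the $r$-sets in $G_i\setminus G_{i-1}$ are those infected at step $i$, and $G_0$ is stationary if $G_1=G_0$. Definition (sequential): Let $r\ge 3$, let $H$ be an $r$-graph with vertex set $V(H)\subseteq A_r^*$, and let $(e_i)_{i=0}^T$ be a sequence of $r$-subsets of $V(H)$ with $e_0\in H$. Then $H$ is $(e_i)_{i=0}^T$-sequential if, for the $F_r$-bootstrap process in the complete $r$-graph on $V(H)$: (i) starting from $H$, the process runs for $T$ steps (becomes stationary after step $T$), infecting only the $r$-set $e_i$ at step $i$ for each $i\in[1,T]$; (ii) $H\setminus\{e_0\}$ is stationary; (iii) starting from $(H\cup\{e_T\})\setminus\{e_0\}$, the process infects only the $r$-set $e_{T-i}$ at step $i$ for each $i\in[1,T]$. *)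

theory Defs
  imports Main
begin

text \<open>Vertices v^i_j are encoded as pairs (i, j). The parameter k fixes |A_i| = 4k-3.\<close>

type_synonym vert = "nat \<times> nat"

definition vtx :: "nat \<Rightarrow> nat \<Rightarrow> vert" where
  "vtx i j = (i, j)"

definition Aset :: "nat \<Rightarrow> nat \<Rightarrow> vert set" where
  "Aset k i = {vtx i j | j. 1 \<le> j \<and> j \<le> 4 * k - 3}"

definition Astar :: "nat \<Rightarrow> nat \<Rightarrow> vert set" where
  "Astar k i = (\<Union>j\<in>{1..i}. Aset k j)"

definition is_rgraph :: "nat \<Rightarrow> 'a set \<Rightarrow> 'a set set \<Rightarrow> bool" where
  "is_rgraph r V G \<longleftrightarrow> (\<forall>e\<in>G. e \<subseteq> V \<and> card e = r)"

text \<open>One step of the F_r-bootstrap process in the complete r-graph on V.\<close>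
definition boot_step :: "nat \<Rightarrow> 'a set \<Rightarrow> 'a set set \<Rightarrow> 'a set set" where
  "boot_step r V G = G \<union> {e. e \<subseteq> V \<and> card e = r \<and> e \<notin> G \<and>
      (\<exists>w\<in>V - e. \<forall>f. f \<subseteq> insert w e \<and> card f = r \<and> f \<noteq> e \<longrightarrow> f \<in> G)}"

definition boot :: "nat \<Rightarrow> 'a set \<Rightarrow> 'a set set \<Rightarrow> nat \<Rightarrow> 'a set set" where
  "boot r V G0 i = (boot_step r V ^^ i) G0"

definition stationary :: "nat \<Rightarrow> 'a set \<Rightarrow> 'a set set \<Rightarrow> bool" where
  "stationary r V G \<longleftrightarrow> boot_step r V G = G"

definition sequential ::
  "nat \<Rightarrow> nat \<Rightarrow> vert set \<Rightarrow> vert set set \<Rightarrow> (nat \<Rightarrow> vert set) \<Rightarrow> nat \<Rightarrow> bool" where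
  "sequential k r V H es T \<longleftrightarrow>
     3 \<le> r \<and> V \<subseteq> Astar k r \<and> is_rgraph r V H \<and>
     (\<forall>i\<le>T. es i \<subseteq> V \<and> card (es i) = r) \<and> es 0 \<in> H \<and>
     (\<forall>i\<in>{1..T}. boot r V H i - boot r V H (i - 1) = {es i}) \<and>
     boot r V H (Suc T) = boot r V H T \<and>
     stationary r V (H - {es 0}) \<and>
     (\<forall>i\<in>{1..T}. boot r V ((H \<union> {es T}) - {es 0}) i
                  - boot r V ((H \<union> {es T}) - {es 0}) (i - 1) = {es (T - i)})"

definition replace_vertex :: "'a \<Rightarrow> 'a \<Rightarrow> 'a set set \<Rightarrow> 'a set set" where
  "replace_vertex x y G = (\<lambda>e. (\<lambda>u. if u = x then y else u) ` e) ` G"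

definition gadget :: "nat \<Rightarrow> 'a \<Rightarrow> 'a \<Rightarrow> 'a \<Rightarrow> 'a set \<Rightarrow> 'a set set" where
  "gadget r a b c D = {e. e \<subseteq> {a, b, c} \<union> D \<and> card e = r \<and>
                          \<not> {a, c} \<subseteq> e \<and> \<not> D \<subseteq> e}"

end

theory Submission
  imports Defs
begin

lemma Astar_mem: "u \<in> Astar k i \<longleftrightarrow> 1 \<le> fst u \<and> fst u \<le> i \<and> 1 \<le> snd u \<and> snd u \<le> 4*k-3"
  by (cases u) (auto simp: Astar_def Aset_def vtx_def)

lemma finite_Astar: "finite (Astar k i)"
proof -
  have "Astar k i \<subseteq> {1..i} \<times> {1..4*k-3}" by (auto simp: Astar_mem)
  then show ?thesis by (rule finite_subset) simp
qed

lemma boot_step_mono: "G \<subseteq> boot_step r V G" by (auto simp: boot_step_def)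

lemma new_char: "e \<in> boot_step r V G - G \<longleftrightarrow> e \<subseteq> V \<and> card e = r \<and> e \<notin> G \<and>
   (\<exists>w\<in>V - e. \<forall>f. f \<subseteq> insert w e \<and> card f = r \<and> f \<noteq> e \<longrightarrow> f \<in> G)"
  by (auto simp: boot_step_def)

definition goodrun :: "nat \<Rightarrow> vert set \<Rightarrow> vert set set \<Rightarrow> nat \<Rightarrow> (nat \<Rightarrow> vert set) \<Rightarrow> bool" where
  "goodrun r W B T1 c \<longleftrightarrow> (\<forall>s<T1. boot_step r W (B \<union> c ` {0..s}) - (B \<union> c ` {0..s}) = {c (Suc s)})
     \<and> boot_step r W (B \<union> c ` {0..T1}) = B \<union> c ` {0..T1} \<and> c 0 \<notin> B"

locale seqsetup =
  fixes r k T1 :: nat and H1 :: "vert set set" and a :: "nat \<Rightarrow> vert set"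
  assumes r3: "3 \<le> r" and k2: "2 \<le> k" and T1pos: "1 \<le> T1"
  and H1g: "\<And>f. f \<in> H1 \<Longrightarrow> f \<subseteq> Astar k (r-1) \<union> {(r,1)} \<and> card f = r"
  and aV: "\<And>i. i \<le> T1 \<Longrightarrow> a i \<subseteq> Astar k (r-1) \<union> {(r,1)} \<and> card (a i) = r \<and> (r,1) \<in> a i"
  and a0H: "a 0 \<in> H1"
  and statB: "boot_step r (Astar k (r-1) \<union> {(r,1)}) (H1 - {a 0}) = H1 - {a 0}"
  and gra: "goodrun r (Astar k (r-1) \<union> {(r,1)}) (H1 - {a 0}) T1 a"
  and grb: "goodrun r (Astar k (r-1) \<union> {(r,1)}) (H1 - {a 0}) T1 (\<lambda>i. a (T1 - i))"
begin

definition "A0 = Astar k (r-1)"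
definition "V1 = A0 \<union> {(r,1)}"
definition "V = Astar k r"
definition "B = H1 - {a 0}"
definition "L = 2*k - 2"
definition "run (p::nat) = (if even p then a else (\<lambda>i. a (T1 - i)))"
definition "fm m u = (if u = (r,1) then (r,m) else u)"
definition "ph m g = fm m ` g"
definition "Dg p = run p T1 - {(r,1)}"
definition "gad p = gadget r (r,2*p+1) (r,2*p+2) (r,2*p+3) (Dg p)"
definition "Gad = (\<Union>p<L. gad p)"
definition "St R EV = Gad \<union> (\<Union>p\<le>L. ph (2*p+1) ` R p) \<union> (\<lambda>p. insert (r,2*p+2) (Dg p)) ` EV"
definition "new G = boot_step r V G - G"
definition "new1 G = boot_step r V1 G - G"
definition "Prop G = {insert (r,x) (Dg p) | p x y. p < L \<and> x \<in> {2*p+1,2*p+2,2*p+3} \<and> y \<in> {2*p+1,2*p+2,2*p+3}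
   \<and> (y = Suc x \<or> x = Suc y) \<and> insert (r,y) (Dg p) \<in> G \<and> insert (r,x) (Dg p) \<notin> G}"

lemma r1: "1 \<le> r" using r3 by simp

lemma A0_mem: "u \<in> A0 \<longleftrightarrow> 1 \<le> fst u \<and> fst u \<le> r-1 \<and> 1 \<le> snd u \<and> snd u \<le> 4*k-3"
  by (simp add: A0_def Astar_mem)
lemma V_mem: "u \<in> V \<longleftrightarrow> 1 \<le> fst u \<and> fst u \<le> r \<and> 1 \<le> snd u \<and> snd u \<le> 4*k-3"
  by (simp add: V_def Astar_mem)
lemma V1_mem: "u \<in> V1 \<longleftrightarrow> u \<in> A0 \<or> u = (r,1)"
  by (auto simp: V1_def)
lemma top_notA0: "(r,x) \<notin> A0" using r3 by (simp add: A0_mem)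
lemma V_split: "u \<in> V \<Longrightarrow> fst u \<noteq> r \<Longrightarrow> u \<in> A0"
  using r3 by (auto simp: V_mem A0_mem)
lemma A0_V: "A0 \<subseteq> V" by (auto simp: A0_mem V_mem)
lemma topV: "1 \<le> x \<Longrightarrow> x \<le> 4*k-3 \<Longrightarrow> (r,x) \<in> V" using r3 by (simp add: V_mem)
lemma V1_V: "V1 \<subseteq> V" using A0_V topV[of 1] k2 by (auto simp: V1_def)
lemma finV: "finite V" by (simp add: V_def finite_Astar)
lemma A0_fst: "u \<in> A0 \<Longrightarrow> fst u \<noteq> r" using r3 by (auto simp: A0_mem)

lemma fm_inj: "inj_on (fm m) V1"
  by (auto simp: inj_on_def fm_def V1_mem top_notA0)
lemma ph_card: "g \<subseteq> V1 \<Longrightarrow> card (ph m g) = card g"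
  unfolding ph_def by (meson card_image fm_inj inj_on_subset)
lemma ph_sub: "g \<subseteq> V1 \<Longrightarrow> ph m g \<subseteq> A0 \<union> {(r,m)}"
  by (auto simp: ph_def fm_def V1_mem)
lemma ph_subV: "g \<subseteq> V1 \<Longrightarrow> 1 \<le> m \<Longrightarrow> m \<le> 4*k-3 \<Longrightarrow> ph m g \<subseteq> V"
  using ph_sub[of g m] A0_V topV[of m] by auto
lemma ph_top: "g \<subseteq> V1 \<Longrightarrow> (r,x) \<in> ph m g \<Longrightarrow> x = m"
  using ph_sub[of g m] top_notA0 by auto
lemma ph_inj: "g \<subseteq> V1 \<Longrightarrow> g' \<subseteq> V1 \<Longrightarrow> ph m g = ph m g' \<Longrightarrow> g = g'"
  unfolding ph_def by (meson fm_inj inj_on_image_eq_iff)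
lemma ph_id: "(r,1) \<notin> g \<Longrightarrow> ph m g = g"
  by (auto simp: ph_def fm_def image_iff)
lemma ph_1: "ph 1 g = g"
  by (simp add: ph_def fm_def)
lemma ph_1': "ph (Suc 0) g = g"
  by (simp add: ph_def fm_def)
lemma ph_mem1: "(r,1) \<in> g \<Longrightarrow> (r,m) \<in> ph m g"
  by (force simp: ph_def fm_def)

lemma run_V: "i \<le> T1 \<Longrightarrow> run p i \<subseteq> V1 \<and> card (run p i) = r \<and> (r,1) \<in> run p i"
proof (cases "even p")
  case True
  assume "i \<le> T1"
  then show ?thesis using True aV[of i] by (simp add: run_def V1_def A0_def)
next
  case False
  assume "i \<le> T1"
  then show ?thesis using False aV[of "T1-i"] by (simp add: run_def V1_def A0_def)
qed
lemma Dg_A0: "Dg p \<subseteq> A0"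
  using run_V[of T1 p] unfolding Dg_def V1_def by blast
lemma fin_Dg: "finite (Dg p)"
  by (metis A0_def Dg_A0 finite_Astar finite_subset)
lemma card_Dg: "card (Dg p) = r - 1"
  using run_V[of T1 p] by (simp add: Dg_def)
lemma ins_Dg: "insert (r,1) (Dg p) = run p T1"
  using run_V[of T1 p] by (auto simp: Dg_def)
lemma ph_ins: "(r,1) \<in> g \<Longrightarrow> ph m g = insert (r,m) (g - {(r,1)})"
  by (auto simp: ph_def fm_def)
lemma ph_run: "ph m (run p T1) = insert (r,m) (Dg p)"
  using run_V[of T1 p] by (simp add: ph_ins Dg_def)
lemma run_next: "run (Suc p) 0 = run p T1"
  by (simp add: run_def)
lemma notin_Dg: "(r,x) \<notin> Dg p"
  using Dg_A0 top_notA0 by blast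

lemma card_small:
  assumes "finite D" "card D = r - 1" "f \<subseteq> insert t D" "\<not> D \<subseteq> f"
  shows "card f < r"
proof -
  obtain d where d: "d \<in> D" "d \<notin> f" using assms(4) by blast
  have "f \<subseteq> insert t (D - {d})" using assms(3) d by auto
  then have "card f \<le> card (insert t (D - {d}))" using assms(1) by (simp add: card_mono)
  also have "\<dots> \<le> Suc (card (D - {d}))" by (simp add: card_insert_le_m1)
  also have "\<dots> = Suc (r - 1 - 1)" using assms(1,2) d by simp
  finally show ?thesis using r3 by simp
qed

lemma gad_props:
  assumes "f \<in> gad p"
  shows "f \<subseteq> {(r,2*p+1),(r,2*p+2),(r,2*p+3)} \<union> Dg p" "card f = r" "(r,2*p+2) \<in> f"
    "(r,2*p+1) \<in> f \<or> (r,2*p+3) \<in> f" "\<not> ((r,2*p+1) \<in> f \<and> (r,2*p+3) \<in> f)" "\<not> Dg p \<subseteq> f"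
proof -
  have f: "f \<subseteq> {(r,2*p+1),(r,2*p+2),(r,2*p+3)} \<union> Dg p" "card f = r"
     "\<not> ((r,2*p+1) \<in> f \<and> (r,2*p+3) \<in> f)" "\<not> Dg p \<subseteq> f"
    using assms by (auto simp: gad_def gadget_def)
  then show "f \<subseteq> {(r,2*p+1),(r,2*p+2),(r,2*p+3)} \<union> Dg p" "card f = r"
     "\<not> ((r,2*p+1) \<in> f \<and> (r,2*p+3) \<in> f)" "\<not> Dg p \<subseteq> f" by auto
  show "(r,2*p+2) \<in> f"
  proof (rule ccontr)
    assume n: "(r,2*p+2) \<notin> f"
    show False
    proof (cases "(r,2*p+1) \<in> f")
      case True
      then have "f \<subseteq> insert (r,2*p+1) (Dg p)" using f n by auto
      from card_small[OF fin_Dg card_Dg this f(4)] f(2) show False by simp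
    next
      case False
      then have "f \<subseteq> insert (r,2*p+3) (Dg p)" using f n by auto
      from card_small[OF fin_Dg card_Dg this f(4)] f(2) show False by simp
    qed
  qed
  show "(r,2*p+1) \<in> f \<or> (r,2*p+3) \<in> f"
  proof (rule ccontr)
    assume n: "\<not> ((r,2*p+1) \<in> f \<or> (r,2*p+3) \<in> f)"
    then have "f \<subseteq> insert (r,2*p+2) (Dg p)" using f by auto
    from card_small[OF fin_Dg card_Dg this f(4)] f(2) show False by simp
  qed
qed

lemma tri_V: "p < L \<Longrightarrow> {(r,2*p+1),(r,2*p+2),(r,2*p+3)} \<subseteq> V"
proof -
  assume "p < L"
  then have "2*p+3 \<le> 4*k-3" by (simp add: L_def)
  then show ?thesis using topV[of "2*p+1"] topV[of "2*p+2"] topV[of "2*p+3"] by simp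
qed
lemma tri_V': "p < L \<Longrightarrow> j \<in> {2*p+1,2*p+2,2*p+3} \<Longrightarrow> (r,j) \<in> V"
  using tri_V by blast
lemma gad_V: "p < L \<Longrightarrow> f \<in> gad p \<Longrightarrow> f \<subseteq> V"
  using gad_props(1)[of f p] Dg_A0[of p] A0_V tri_V[of p] by blast

lemma B_V1: "g \<in> B \<Longrightarrow> g \<subseteq> V1 \<and> card g = r"
  using H1g by (auto simp: B_def V1_def A0_def)

end

locale stctx = seqsetup +
  fixes R :: "nat \<Rightarrow> vert set set" and EV :: "nat set"
  assumes RB: "\<And>p. p \<le> L \<Longrightarrow> B \<subseteq> R p"
  and RV: "\<And>p g. p \<le> L \<Longrightarrow> g \<in> R p \<Longrightarrow> g \<subseteq> V1 \<and> card g = r"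
  and R1: "\<And>p g. p \<le> L \<Longrightarrow> g \<in> R p \<Longrightarrow> (r,1) \<notin> g \<Longrightarrow> g \<in> B"
  and EVL: "EV \<subseteq> {..<L}"
begin

lemma stE:
  assumes "f \<in> St R EV"
  obtains p where "p < L" "f \<in> gad p"
  | p g where "p \<le> L" "g \<in> R p" "f = ph (2*p+1) g"
  | p where "p \<in> EV" "f = insert (r,2*p+2) (Dg p)"
  using assms unfolding St_def Gad_def by blast

lemma Gad_St: "p < L \<Longrightarrow> f \<in> gad p \<Longrightarrow> f \<in> St R EV"
  unfolding St_def Gad_def by blast

lemma RL: "p \<le> L \<Longrightarrow> g \<subseteq> V1 \<Longrightarrow> ph (2*p+1) g \<in> St R EV \<longleftrightarrow> g \<in> R p"
proof
  assume p: "p \<le> L" and g: "g \<subseteq> V1"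
  assume "g \<in> R p" then show "ph (2*p+1) g \<in> St R EV" using p unfolding St_def by blast
next
  assume p: "p \<le> L" and g: "g \<subseteq> V1" and m: "ph (2*p+1) g \<in> St R EV"
  show "g \<in> R p"
    using m
  proof (cases rule: stE)
    case (1 q)
    then have "(r,2*q+2) \<in> ph (2*p+1) g" using gad_props(3) by blast
    then have "2*q+2 = 2*p+1" using ph_top[OF g] by blast
    then have False by presburger
    then show ?thesis ..
  next
    case (2 q g')
    have g'V: "g' \<subseteq> V1" using RV[OF 2(1,2)] by blast
    show ?thesis
    proof (cases "q = p")
      case True
      have "g = g'" using ph_inj[OF g g'V] 2(3) True by simp
      then show ?thesis using 2(2) True by simp
    next
      case False
      have n1: "(r,1) \<notin> g'"
      proof
        assume "(r,1) \<in> g'"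
        then have "(r,2*q+1) \<in> ph (2*q+1) g'" by (rule ph_mem1)
        then have "(r,2*q+1) \<in> ph (2*p+1) g" using 2(3) by simp
        then have "2*q+1 = 2*p+1" using ph_top[OF g] by blast
        then show False using False by simp
      qed
      then have g'B: "g' \<in> B" using R1[OF 2(1,2)] by blast
      have e1: "ph (2*p+1) g = g'" using 2(3) ph_id[OF n1] by simp
      show ?thesis
      proof (cases "(r,1) \<in> g")
        case True
        then have "(r,2*p+1) \<in> g'" using e1 ph_mem1 by blast
        then have "(r,2*p+1) \<in> V1" using g'V by blast
        then have "p = 0" using top_notA0 by (simp add: V1_mem)
        then have "g = g'" using e1 by (simp add: ph_1')
        then show ?thesis using g'B RB[OF p] by blast
      next
        case False
        from e1 ph_id[OF False, of "2*p+1"] have "g = g'" by simp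
        then show ?thesis using g'B RB[OF p] by blast
      qed
    qed
  next
    case (3 q)
    then have "(r,2*q+2) \<in> ph (2*p+1) g" by simp
    then have "2*q+2 = 2*p+1" using ph_top[OF g] by blast
    then have False by presburger
    then show ?thesis ..
  qed
qed

lemma St_V: assumes "f \<in> St R EV" shows "f \<subseteq> V \<and> card f = r"
  using assms
proof (cases rule: stE)
  case (1 p)
  then show ?thesis using gad_V gad_props(2) by blast
next
  case (2 p g)
  have "2*p+1 \<le> 4*k-3" using 2(1) k2 by (simp add: L_def)
  then show ?thesis using 2 RV[OF 2(1,2)] ph_subV ph_card by simp
next
  case (3 p)
  have "p < L" using 3(1) EVL by blast
  then have "(r,2*p+2) \<in> V" using tri_V by blast
  moreover have "card (insert (r,2*p+2) (Dg p)) = Suc (card (Dg p))" by (rule card_insert_disjoint[OF fin_Dg notin_Dg])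
  then have "card (insert (r,2*p+2) (Dg p)) = r" using card_Dg[of p] r3 by simp
  ultimately show ?thesis using 3(2) Dg_A0 A0_V by blast
qed

lemma twoTop:
  assumes "f \<in> St R EV" "(r,x) \<in> f" "(r,y) \<in> f" "x \<noteq> y"
  shows "\<exists>p<L. f \<in> gad p \<and> ((x = 2*p+2 \<and> (y = 2*p+1 \<or> y = 2*p+3)) \<or> (y = 2*p+2 \<and> (x = 2*p+1 \<or> x = 2*p+3)))"
  using assms(1)
proof (cases rule: stE)
  case (1 p)
  have tx: "x \<in> {2*p+1,2*p+2,2*p+3}" using gad_props(1)[OF 1(2)] assms(2) notin_Dg by blast
  have ty: "y \<in> {2*p+1,2*p+2,2*p+3}" using gad_props(1)[OF 1(2)] assms(3) notin_Dg by blast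
  have "\<not> ((r,2*p+1) \<in> f \<and> (r,2*p+3) \<in> f)" using gad_props(5)[OF 1(2)] .
  then have "(x = 2*p+2 \<and> (y = 2*p+1 \<or> y = 2*p+3)) \<or> (y = 2*p+2 \<and> (x = 2*p+1 \<or> x = 2*p+3))"
    using tx ty assms(2,3,4) by auto
  then show ?thesis using 1 by blast
next
  case (2 p g)
  have "x = 2*p+1" "y = 2*p+1" using ph_top RV[OF 2(1,2)] assms(2,3) 2(3) by blast+
  then show ?thesis using assms(4) by simp
next
  case (3 p)
  then show ?thesis using assms(2,3,4) notin_Dg by auto
qed

lemma oneTopEven:
  assumes "f \<in> St R EV" "(r,2*q+2) \<in> f" "\<And>z. (r,z) \<in> f \<Longrightarrow> z = 2*q+2"
  shows "q \<in> EV \<and> f = insert (r,2*q+2) (Dg q)"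
  using assms(1)
proof (cases rule: stE)
  case (1 p)
  have "(r,2*p+2) \<in> f" "(r,2*p+1) \<in> f \<or> (r,2*p+3) \<in> f" using gad_props(3,4)[OF 1(2)] by blast+
  then have "2*p+2 = 2*q+2" "2*p+1 = 2*q+2 \<or> 2*p+3 = 2*q+2" using assms(3) by blast+
  then have False by presburger
  then show ?thesis ..
next
  case (2 p g)
  have "2*q+2 = 2*p+1" using ph_top RV[OF 2(1,2)] assms(2) 2(3) by blast
  then have False by presburger
  then show ?thesis ..
next
  case (3 p)
  then have "p = q" using assms(2) notin_Dg by auto
  then show ?thesis using 3 by simp
qed

lemma Ev_St: "q \<in> EV \<Longrightarrow> insert (r,2*q+2) (Dg q) \<in> St R EV"
  unfolding St_def by blast

end

context stctx
begin

lemma two_el: "finite X \<Longrightarrow> 2 \<le> card X \<Longrightarrow> \<exists>y1\<in>X. \<exists>y2\<in>X. y1 \<noteq> y2"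
  by (metis One_nat_def card.empty card_le_Suc0_iff_eq not_less_eq_eq numeral_2_eq_2 zero_le)

lemma decomp_sub: "new (St R EV) \<subseteq> (\<Union>p\<le>L. ph (2*p+1) ` new1 (R p)) \<union> Prop (St R EV)"
proof
  fix e assume "e \<in> new (St R EV)"
  then obtain w where eV: "e \<subseteq> V" and ce: "card e = r" and eG: "e \<notin> St R EV" and wV: "w \<in> V" and we: "w \<notin> e"
    and allf: "\<And>f. f \<subseteq> insert w e \<Longrightarrow> card f = r \<Longrightarrow> f \<noteq> e \<Longrightarrow> f \<in> St R EV"
    unfolding new_def new_char by blast
  define S where "S = insert w e"
  have SV: "S \<subseteq> V" using eV wV S_def by auto
  have finS: "finite S" using SV finV by (rule finite_subset)
  have fine: "finite e" using finS S_def by auto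
  have cS: "card S = Suc r" using ce we fine S_def by simp
  have eS: "e = S - {w}" using we S_def by auto
  have wS: "w \<in> S" using S_def by simp
  have sub: "S - {y} \<in> St R EV" if "y \<in> S" "y \<noteq> w" for y
  proof (rule allf)
    show "S - {y} \<subseteq> insert w e" using S_def by auto
    show "card (S - {y}) = r" using that cS finS by simp
    show "S - {y} \<noteq> e" using that we S_def by auto
  qed
  have other: "\<exists>z\<in>S. z \<notin> X" if "finite X" "card X < Suc r" for X
  proof (rule ccontr)
    assume "\<not> (\<exists>z\<in>S. z \<notin> X)"
    then have "S \<subseteq> X" by blast
    then have "card S \<le> card X" using card_mono[OF that(1)] by blast
    then show False using that(2) cS by simp
  qed
  have adj: "\<exists>p<L. (x = 2*p+2 \<and> (y = 2*p+1 \<or> y = 2*p+3)) \<or> (y = 2*p+2 \<and> (x = 2*p+1 \<or> x = 2*p+3))"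
    if "(r,x) \<in> S" "(r,y) \<in> S" "x \<noteq> y" for x y
  proof -
    have "card {(r,x),(r,y),w} \<le> 3" by (simp add: card_insert_le_m1)
    then obtain z where z: "z \<in> S" "z \<notin> {(r,x),(r,y),w}" using other[of "{(r,x),(r,y),w}"] r3 by auto
    then have "S - {z} \<in> St R EV" using sub by blast
    moreover have "(r,x) \<in> S - {z}" "(r,y) \<in> S - {z}" using z that by auto
    ultimately show ?thesis using twoTop that(3) by blast
  qed
  have adj2: "x = Suc y \<or> y = Suc x" if "(r,x) \<in> S" "(r,y) \<in> S" "x \<noteq> y" for x y
    using adj[OF that] by auto
  have topS: "u \<in> S \<Longrightarrow> fst u \<noteq> r \<Longrightarrow> u \<in> A0" for u using SV V_split by blast
  show "e \<in> (\<Union>p\<le>L. ph (2*p+1) ` new1 (R p)) \<union> Prop (St R EV)"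
  proof (cases "\<exists>x y. (r,x) \<in> S \<and> (r,y) \<in> S \<and> x \<noteq> y")
    case True
    then obtain x y where xy: "(r,x) \<in> S" "(r,y) \<in> S" "x \<noteq> y" by blast
    have only: "z = x \<or> z = y" if "(r,z) \<in> S" for z
    proof (rule ccontr)
      assume "\<not> (z = x \<or> z = y)"
      then have "x = Suc y \<or> y = Suc x" "x = Suc z \<or> z = Suc x" "z = Suc y \<or> y = Suc z"
        using adj2 xy that by blast+
      then show False by arith
    qed
    define So where "So = S - {(r,x),(r,y)}"
    have SoA: "So \<subseteq> A0"
    proof
      fix u assume u: "u \<in> So"
      have "fst u \<noteq> r"
      proof
        assume "fst u = r"
        then have "(r, snd u) \<in> S" using u So_def by (metis DiffD1 prod.collapse)
        then have "u = (r,x) \<or> u = (r,y)" using only \<open>fst u = r\<close> by (metis prod.collapse)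
        then show False using u So_def by auto
      qed
      then show "u \<in> A0" using topS u So_def by blast
    qed
    have finSo: "finite So" using finS So_def by simp
    have cSo: "card So = r - 1" using cS xy finS So_def by (simp add: card_Diff_subset)
    show ?thesis
    proof (cases "w \<in> So")
      case True
      have "2 \<le> card So" using cSo r3 by simp
      then obtain y1 where y1: "y1 \<in> So" "y1 \<noteq> w" using two_el[OF finSo] by metis
      have "S - {y1} \<in> St R EV" using sub y1 So_def by blast
      moreover have "(r,x) \<in> S - {y1}" "(r,y) \<in> S - {y1}" using y1 xy So_def by auto
      ultimately obtain p where p: "p < L" "S - {y1} \<in> gad p"
        and pat: "(x = 2*p+2 \<and> (y = 2*p+1 \<or> y = 2*p+3)) \<or> (y = 2*p+2 \<and> (x = 2*p+1 \<or> x = 2*p+3))"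
        using twoTop xy(3) by blast
      obtain mid oth where mo: "x = mid \<and> y = oth \<or> x = oth \<and> y = mid" "mid = 2*p+2" "oth = 2*p+1 \<or> oth = 2*p+3"
        using pat by blast
      have mneo: "mid \<noteq> oth" using mo(2,3) by auto
      have othS: "(r,oth) \<in> S" "(r,mid) \<in> S" using mo(1) xy by auto
      have othw: "(r,oth) \<noteq> w" using True So_def mo(1) by auto
      have S1: "S - {(r,oth)} \<in> St R EV" using sub othS othw by blast
      have "(r,mid) \<in> S - {(r,oth)}" using othS mneo by simp
      moreover have "z = mid" if "(r,z) \<in> S - {(r,oth)}" for z
      proof -
        have "z = x \<or> z = y" using only that by blast
        moreover have "z \<noteq> oth" using that by blast
        ultimately show ?thesis using mo(1) by blast
      qed
      ultimately have "S - {(r,oth)} = insert (r,2*p+2) (Dg p)" using oneTopEven[OF S1] mo(2) by blast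
      note Seq = this
      have wSo: "w \<in> S" "w \<noteq> (r,x)" "w \<noteq> (r,y)" using True unfolding So_def by blast+
      have wmo: "w \<noteq> (r,mid)" "w \<noteq> (r,oth)" using wSo(2,3) mo(1) by blast+
      have "w \<in> insert (r,2*p+2) (Dg p)" using Seq wSo(1) wmo(2) by blast
      then have wD: "w \<in> Dg p" using wmo(1) mo(2) by blast
      have SoD: "So \<subseteq> Dg p"
      proof
        fix u assume u: "u \<in> So"
        have uS: "u \<in> S" "u \<noteq> (r,x)" "u \<noteq> (r,y)" using u unfolding So_def by blast+
        have umo: "u \<noteq> (r,mid)" "u \<noteq> (r,oth)" using uS(2,3) mo(1) by blast+
        have "u \<in> insert (r,2*p+2) (Dg p)" using Seq uS(1) umo(2) by blast
        then show "u \<in> Dg p" using umo(1) mo(2) by blast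
      qed
      have xyt: "x \<in> {2*p+1,2*p+2,2*p+3}" "y \<in> {2*p+1,2*p+2,2*p+3}" using mo by auto
      have "e \<in> gad p"
        unfolding gad_def gadget_def
      proof (intro CollectI conjI)
        show "e \<subseteq> {(r,2*p+1),(r,2*p+2),(r,2*p+3)} \<union> Dg p"
        proof
          fix u assume u: "u \<in> e"
          then have uS: "u \<in> S" using eS by blast
          show "u \<in> {(r,2*p+1),(r,2*p+2),(r,2*p+3)} \<union> Dg p"
          proof (cases "u = (r,x) \<or> u = (r,y)")
            case True
            then show ?thesis using xyt by auto
          next
            case False
            then have "u \<in> So" using uS unfolding So_def by blast
            then show ?thesis using SoD by blast
          qed
        qed
        show "card e = r" by (rule ce)
        show "\<not> {(r,2*p+1),(r,2*p+3)} \<subseteq> e"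
        proof
          assume "{(r,2*p+1),(r,2*p+3)} \<subseteq> e"
          then have "(r,2*p+1) \<in> S" "(r,2*p+3) \<in> S" using eS by auto
          then have "2*p+1 = x \<or> 2*p+1 = y" "2*p+3 = x \<or> 2*p+3 = y" using only by blast+
          then show False using mo(1,2) by auto
        qed
        show "\<not> Dg p \<subseteq> e" using wD we by blast
      qed
      then have "e \<in> St R EV" using Gad_St p(1) by blast
      then show ?thesis using eG by blast
    next
      case False
      then have wxy: "w \<in> {(r,x),(r,y)}" using wS So_def by blast
      have "2 \<le> card So" using cSo r3 by simp
      then obtain y1 y2 where y12: "y1 \<in> So" "y2 \<in> So" "y1 \<noteq> y2" using two_el[OF finSo] by metis
      have sy: "S - {y} \<in> gad p \<and> x + y' = 0 \<or> True" for y y' p by simp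
      have gy: "\<exists>p<L. S - {yy} \<in> gad p \<and> ((x = 2*p+2 \<and> (y = 2*p+1 \<or> y = 2*p+3)) \<or> (y = 2*p+2 \<and> (x = 2*p+1 \<or> x = 2*p+3)))"
        if "yy \<in> So" for yy
      proof -
        have "S - {yy} \<in> St R EV" using sub that False So_def by blast
        moreover have "(r,x) \<in> S - {yy}" "(r,y) \<in> S - {yy}" using that xy So_def by auto
        ultimately show ?thesis using twoTop xy(3) by blast
      qed
      obtain p where p: "p < L" "S - {y1} \<in> gad p"
        and pat: "(x = 2*p+2 \<and> (y = 2*p+1 \<or> y = 2*p+3)) \<or> (y = 2*p+2 \<and> (x = 2*p+1 \<or> x = 2*p+3))"
        using gy[OF y12(1)] by blast
      obtain p' where p': "p' < L" "S - {y2} \<in> gad p'"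
        and pat': "(x = 2*p'+2 \<and> (y = 2*p'+1 \<or> y = 2*p'+3)) \<or> (y = 2*p'+2 \<and> (x = 2*p'+1 \<or> x = 2*p'+3))"
        using gy[OF y12(2)] by blast
      have pp: "p' = p" using pat pat' by presburger
      have SoD1: "So - {yy} \<subseteq> Dg p" if "S - {yy} \<in> gad p" for yy
      proof
        fix u assume u: "u \<in> So - {yy}"
        then have "u \<in> A0" using SoA by blast
        then have "u \<notin> {(r,2*p+1),(r,2*p+2),(r,2*p+3)}" using top_notA0 by auto
        moreover have "u \<in> S - {yy}" using u So_def by blast
        ultimately show "u \<in> Dg p" using gad_props(1)[OF that] by blast
      qed
      have "So \<subseteq> Dg p" using SoD1[OF p(2)] SoD1[of y2] p'(2) pp y12(3) by blast
      then have SoDe: "So = Dg p" using card_subset_eq[OF fin_Dg] cSo card_Dg by metis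
      obtain xw xo where xwo: "w = (r,xw)" "{xw,xo} = {x,y}" "xw \<noteq> xo" using wxy xy(3) by blast
      have eD: "e = insert (r,xo) (Dg p)"
        using eS xwo SoDe So_def xy by auto
      have "(r,xo) \<in> S" "(r,xo) \<noteq> w" using xwo xy by (auto simp: doubleton_eq_iff)
      then have "S - {(r,xo)} \<in> St R EV" using sub by blast
      moreover have "S - {(r,xo)} = insert (r,xw) (Dg p)"
        using xwo SoDe So_def xy wS by (auto simp: doubleton_eq_iff)
      ultimately have nb: "insert (r,xw) (Dg p) \<in> St R EV" by simp
      have tri: "xo \<in> {2*p+1,2*p+2,2*p+3}" "xw \<in> {2*p+1,2*p+2,2*p+3}" "xw = Suc xo \<or> xo = Suc xw"
        using pat xwo by (auto simp: doubleton_eq_iff)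
      have "e \<in> Prop (St R EV)"
        unfolding Prop_def using p(1) tri nb eG eD by blast
      then show ?thesis by blast
    qed
  next
    case False
    then have uniq: "(r,x) \<in> S \<Longrightarrow> (r,y) \<in> S \<Longrightarrow> x = y" for x y by blast
    show ?thesis
    proof (cases "\<exists>q. (r,2*q+2) \<in> S")
      case True
      then obtain q where q: "(r,2*q+2) \<in> S" by blast
      have "card {(r,2*q+2), w} \<le> 2" by (simp add: card_insert_le_m1)
      define So where "So = S - {(r,2*q+2), w}"
      have "card So \<ge> card S - card {(r,2*q+2), w}" unfolding So_def by (rule diff_card_le_card_Diff) simp
      then have "2 \<le> card So" using cS \<open>card {(r,2*q+2), w} \<le> 2\<close> r3 by simp
      moreover have "finite So" using finS So_def by simp
      ultimately obtain y1 y2 where y12: "y1 \<in> So" "y2 \<in> So" "y1 \<noteq> y2" using two_el by metis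
      have eq: "S - {yy} = insert (r,2*q+2) (Dg q)" if "yy \<in> So" for yy
      proof -
        have "S - {yy} \<in> St R EV" using sub that So_def by blast
        moreover have "(r,2*q+2) \<in> S - {yy}" using q that So_def by auto
        moreover have "z = 2*q+2" if "(r,z) \<in> S - {yy}" for z using uniq q that by blast
        ultimately show ?thesis using oneTopEven by blast
      qed
      have "y1 \<in> S - {y2}" using y12 So_def by auto
      then have "y1 \<in> S - {y1}" using eq[OF y12(1)] eq[OF y12(2)] by simp
      then show ?thesis by simp
    next
      case False
      define m where "m = (if \<exists>x. (r,x) \<in> S then (SOME x. (r,x) \<in> S) else 1)"
      have Sm: "S \<subseteq> A0 \<union> {(r,m)}"
      proof
        fix u assume u: "u \<in> S"
        show "u \<in> A0 \<union> {(r,m)}"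
        proof (cases "fst u = r")
          case True
          then have u': "(r, snd u) \<in> S" using u by (metis prod.collapse)
          then have "(r, SOME x. (r,x) \<in> S) \<in> S" by (metis someI)
          then have "snd u = m" using uniq u' m_def by auto
          then show ?thesis using True by (metis UnCI prod.collapse singletonI)
        qed (use topS u in blast)
      qed
      have modd: "odd m \<and> 1 \<le> m \<and> m \<le> 4*k-3"
      proof (cases "\<exists>x. (r,x) \<in> S")
        case True
        then have mS: "(r,m) \<in> S" using m_def by (metis someI)
        then have "1 \<le> m \<and> m \<le> 4*k-3" using SV by (auto simp: V_mem)
        moreover have "odd m"
        proof
          assume "even m"
          then have "m = 2*((m-2) div 2)+2" using \<open>1 \<le> m \<and> m \<le> 4*k-3\<close> by presburger
          then show False using False mS by metis
        qed
        ultimately show ?thesis by simp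
      next
        case False
        then show ?thesis using m_def k2 by simp
      qed
      define p where "p = (m - 1) div 2"
      have mp: "m = 2*p+1" using modd p_def by presburger
      have pL: "p \<le> L" using modd mp by (simp add: L_def)
      define psi where "psi u = (if u = (r,m) then (r,1) else u)" for u
      have psiV1: "Z \<subseteq> A0 \<union> {(r,m)} \<Longrightarrow> psi ` Z \<subseteq> V1" for Z by (auto simp: psi_def V1_def)
      have phpsi: "Z \<subseteq> A0 \<union> {(r,m)} \<Longrightarrow> ph m (psi ` Z) = Z" for Z
      proof -
        assume Z: "Z \<subseteq> A0 \<union> {(r,m)}"
        have "fm m (psi u) = u" if "u \<in> Z" for u
          using that Z top_notA0 by (auto simp: psi_def fm_def)
        then show ?thesis unfolding ph_def image_image by simp
      qed
      define e' where "e' = psi ` e"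
      have eSm: "e \<subseteq> A0 \<union> {(r,m)}" using Sm S_def by auto
      have e'V1: "e' \<subseteq> V1" using psiV1[OF eSm] e'_def by simp
      have ee': "ph m e' = e" using phpsi[OF eSm] e'_def by simp
      have ce': "card e' = r" using ph_card[OF e'V1, of m] ee' ce by simp
      have e'R: "e' \<notin> R p" using RL[OF pL e'V1] ee' mp eG by simp
      have SSm: "S \<subseteq> A0 \<union> {(r,m)}" by (rule Sm)
      have S'V1: "psi ` S \<subseteq> V1" using psiV1[OF SSm] .
      have w'V1: "psi w \<in> V1" using S'V1 wS by blast
      have w'e': "psi w \<notin> e'"
      proof
        assume "psi w \<in> e'"
        then have "fm m (psi w) \<in> ph m e'" unfolding ph_def by blast
        moreover have "fm m (psi w) = w" using wS Sm top_notA0 by (auto simp: psi_def fm_def)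
        ultimately show False using ee' we by simp
      qed
      have "e' \<in> new1 (R p)"
        unfolding new1_def new_char
      proof (intro conjI bexI[of _ "psi w"] allI impI)
        show "e' \<subseteq> V1" "card e' = r" "e' \<notin> R p" by fact+
        show "psi w \<in> V1 - e'" using w'V1 w'e' by blast
        fix f' assume f': "f' \<subseteq> insert (psi w) e' \<and> card f' = r \<and> f' \<noteq> e'"
        have f'V1: "f' \<subseteq> V1" using f' w'V1 e'V1 by blast
        have "ph m f' \<subseteq> ph m (psi ` S)" using f' e'_def S_def unfolding ph_def by auto
        then have "ph m f' \<subseteq> insert w e" using phpsi[OF SSm] S_def by simp
        moreover have "card (ph m f') = r" using ph_card[OF f'V1] f' by simp
        moreover have "ph m f' \<noteq> e" using ph_inj[OF f'V1 e'V1] ee' f' by metis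
        ultimately have "ph m f' \<in> St R EV" using allf by blast
        then show "f' \<in> R p" using RL[OF pL f'V1] mp by simp
      qed
      then have "e \<in> ph (2*p+1) ` new1 (R p)" using ee' mp by blast
      then show ?thesis using pL by blast
    qed
  qed
qed

end

context stctx
begin

lemma decomp_sup1:
  assumes pL: "p \<le> L" and g: "g \<in> new1 (R p)"
  shows "ph (2*p+1) g \<in> new (St R EV)"
proof -
  obtain w where gV: "g \<subseteq> V1" and cg: "card g = r" and gR: "g \<notin> R p" and wV: "w \<in> V1" and wg: "w \<notin> g"
    and allf: "\<And>f. f \<subseteq> insert w g \<Longrightarrow> card f = r \<Longrightarrow> f \<noteq> g \<Longrightarrow> f \<in> R p"
    using g unfolding new1_def new_char by blast
  let ?m = "2*p+1"
  have m: "1 \<le> ?m" "?m \<le> 4*k-3" using pL k2 by (auto simp: L_def)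
  show ?thesis
    unfolding new_def new_char
  proof (intro conjI bexI[of _ "fm ?m w"] allI impI)
    show "ph ?m g \<subseteq> V" using ph_subV[OF gV m] .
    show "card (ph ?m g) = r" using ph_card[OF gV] cg by simp
    show "ph ?m g \<notin> St R EV" using RL[OF pL gV] gR by simp
    have "fm ?m w \<in> ph ?m (insert w g)" unfolding ph_def by blast
    moreover have "insert w g \<subseteq> V1" using wV gV by blast
    ultimately have "fm ?m w \<in> V" using ph_subV[OF _ m] by blast
    moreover have "fm ?m w \<notin> ph ?m g"
    proof
      assume "fm ?m w \<in> ph ?m g"
      then obtain u where "u \<in> g" "fm ?m w = fm ?m u" unfolding ph_def by blast
      then have "w = u" using fm_inj wV gV unfolding inj_on_def by blast
      then show False using wg \<open>u \<in> g\<close> by simp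
    qed
    ultimately show "fm ?m w \<in> V - ph ?m g" by blast
    fix f assume f: "f \<subseteq> insert (fm ?m w) (ph ?m g) \<and> card f = r \<and> f \<noteq> ph ?m g"
    have "f \<subseteq> fm ?m ` (insert w g)" using f unfolding ph_def by auto
    then obtain f' where f': "f' \<subseteq> insert w g" "f = fm ?m ` f'" by (meson subset_imageE)
    have f'V: "f' \<subseteq> V1" using f'(1) wV gV by blast
    have "f = ph ?m f'" using f'(2) by (simp add: ph_def)
    then have "card f' = r" using ph_card[OF f'V] f by simp
    moreover have "f' \<noteq> g" using f \<open>f = ph ?m f'\<close> by blast
    ultimately have "f' \<in> R p" using allf f'(1) by blast
    then show "f \<in> St R EV" using RL[OF pL f'V] \<open>f = ph ?m f'\<close> by simp
  qed
qed

lemma decomp_sup2: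
  assumes "e \<in> Prop (St R EV)"
  shows "e \<in> new (St R EV)"
proof -
  obtain p x y where p: "p < L" and x: "x \<in> {2*p+1,2*p+2,2*p+3}" and y: "y \<in> {2*p+1,2*p+2,2*p+3}"
    and xy: "y = Suc x \<or> x = Suc y" and nb: "insert (r,y) (Dg p) \<in> St R EV"
    and eG: "insert (r,x) (Dg p) \<notin> St R EV" and e: "e = insert (r,x) (Dg p)"
    using assms unfolding Prop_def by blast
  have xV: "(r,x) \<in> V" "(r,y) \<in> V" using tri_V'[OF p] x y by blast+
  have DV: "Dg p \<subseteq> V" using Dg_A0 A0_V by blast
  have cD: "card (insert (r,z) (Dg p)) = r" for z
  proof -
    have "card (insert (r,z) (Dg p)) = Suc (card (Dg p))" by (rule card_insert_disjoint[OF fin_Dg notin_Dg])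
    then show ?thesis using card_Dg[of p] r3 by simp
  qed
  have xney: "(r,x) \<noteq> (r,y)" using xy by auto
  show ?thesis
    unfolding new_def new_char e
  proof (intro conjI bexI[of _ "(r,y)"] allI impI)
    show "insert (r,x) (Dg p) \<subseteq> V" using xV DV by blast
    show "card (insert (r,x) (Dg p)) = r" by (rule cD)
    show "insert (r,x) (Dg p) \<notin> St R EV" by (rule eG)
    show "(r,y) \<in> V - insert (r,x) (Dg p)" using xV xney notin_Dg by blast
    fix f assume f: "f \<subseteq> insert (r,y) (insert (r,x) (Dg p)) \<and> card f = r \<and> f \<noteq> insert (r,x) (Dg p)"
    have finf: "finite f" using f fin_Dg finite_subset by blast
    show "f \<in> St R EV"
    proof (cases "(r,y) \<in> f")
      case False
      then have "f \<subseteq> insert (r,x) (Dg p)" using f by blast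
      then have "f = insert (r,x) (Dg p)" using card_subset_eq[OF _ _ ] f cD fin_Dg
        by (metis finite_insert)
      then show ?thesis using f by blast
    next
      case yf: True
      show ?thesis
      proof (cases "(r,x) \<in> f")
        case False
        then have "f \<subseteq> insert (r,y) (Dg p)" using f by blast
        then have "f = insert (r,y) (Dg p)" using card_subset_eq f cD fin_Dg
          by (metis finite_insert)
        then show ?thesis using nb by simp
      next
        case xf: True
        have "f \<in> gad p"
          unfolding gad_def gadget_def
        proof (intro CollectI conjI)
          show "f \<subseteq> {(r,2*p+1),(r,2*p+2),(r,2*p+3)} \<union> Dg p" using f x y by auto
          show "card f = r" using f by simp
          show "\<not> {(r,2*p+1),(r,2*p+3)} \<subseteq> f"
          proof
            assume a: "{(r,2*p+1),(r,2*p+3)} \<subseteq> f"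
            have "f \<subseteq> insert (r,y) (insert (r,x) (Dg p))" using f by blast
            then have "2*p+1 \<in> {x,y}" "2*p+3 \<in> {x,y}" using a notin_Dg by blast+
            then show False using xy by auto
          qed
          show "\<not> Dg p \<subseteq> f"
          proof
            assume "Dg p \<subseteq> f"
            then have "insert (r,y) (insert (r,x) (Dg p)) \<subseteq> f" using xf yf by blast
            then have "card (insert (r,y) (insert (r,x) (Dg p))) \<le> card f" using card_mono[OF finf] by blast
            moreover have "card (insert (r,y) (insert (r,x) (Dg p))) = Suc r"
            proof -
              have fi: "finite (insert (r,x) (Dg p))" using fin_Dg by simp
              have ni: "(r,y) \<notin> insert (r,x) (Dg p)" using xney notin_Dg by blast
              show ?thesis using card_insert_disjoint[OF fi ni] cD[of x] by simp
            qed
            ultimately show False using f by simp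
          qed
        qed
        then show ?thesis using Gad_St p by blast
      qed
    qed
  qed
qed

theorem decomp: "new (St R EV) = (\<Union>p\<le>L. ph (2*p+1) ` new1 (R p)) \<union> Prop (St R EV)"
  using decomp_sub decomp_sup1 decomp_sup2 by blast

end

context stctx
begin

lemma memb1: "p < L \<Longrightarrow> insert (r,2*p+1) (Dg p) \<in> St R EV \<longleftrightarrow> run p T1 \<in> R p"
  using RL[of p "run p T1"] run_V[of T1 p] ph_run[of "2*p+1" p] by (simp add: L_def)

lemma memb3: "p < L \<Longrightarrow> insert (r,2*p+3) (Dg p) \<in> St R EV \<longleftrightarrow> run (Suc p) 0 \<in> R (Suc p)"
proof -
  assume p: "p < L"
  have e: "2*Suc p+1 = 2*p+3" by simp
  have "ph (2*Suc p+1) (run (Suc p) 0) = insert (r,2*p+3) (Dg p)"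
    unfolding e run_next by (rule ph_run)
  moreover have "run (Suc p) 0 \<subseteq> V1" using run_V[of 0 "Suc p"] by simp
  moreover have "Suc p \<le> L" using p by simp
  ultimately show ?thesis using RL[of "Suc p" "run (Suc p) 0"] by simp
qed

lemma memb2: "insert (r,2*p+2) (Dg p) \<in> St R EV \<longleftrightarrow> p \<in> EV"
proof
  assume m: "insert (r,2*p+2) (Dg p) \<in> St R EV"
  have "z = 2*p+2" if "(r,z) \<in> insert (r,2*p+2) (Dg p)" for z using that notin_Dg by blast
  then show "p \<in> EV" using oneTopEven[OF m] by blast
qed (rule Ev_St)

lemma Prop_eval:
  assumes P1: "\<And>p. p < L \<Longrightarrow> run p T1 \<in> R p \<longleftrightarrow> P1 p"
  and P2: "\<And>p. p < L \<Longrightarrow> p \<in> EV \<longleftrightarrow> P2 p"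
  and P3: "\<And>p. p < L \<Longrightarrow> run (Suc p) 0 \<in> R (Suc p) \<longleftrightarrow> P3 p"
  and m21: "\<And>p. p < L \<Longrightarrow> P2 p \<Longrightarrow> P1 p" and m32: "\<And>p. p < L \<Longrightarrow> P3 p \<Longrightarrow> P2 p"
  shows "Prop (St R EV) = {insert (r,2*p+2) (Dg p) | p. p < L \<and> P1 p \<and> \<not> P2 p}
     \<union> {insert (r,2*p+3) (Dg p) | p. p < L \<and> P2 p \<and> \<not> P3 p}"
proof -
  have M: "insert (r,x) (Dg p) \<in> St R EV \<longleftrightarrow>
     (if x = 2*p+1 then P1 p else if x = 2*p+2 then P2 p else P3 p)"
    if "p < L" "x \<in> {2*p+1,2*p+2,2*p+3}" for p x
    using that memb1[of p] memb2[of p] memb3[of p] P1[of p] P2[of p] P3[of p] by auto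
  show ?thesis
  proof (intro equalityI subsetI)
    fix e assume "e \<in> Prop (St R EV)"
    then obtain p x y where p: "p < L" and x: "x \<in> {2*p+1,2*p+2,2*p+3}" and y: "y \<in> {2*p+1,2*p+2,2*p+3}"
      and xy: "y = Suc x \<or> x = Suc y" and nb: "insert (r,y) (Dg p) \<in> St R EV"
      and eG: "insert (r,x) (Dg p) \<notin> St R EV" and e: "e = insert (r,x) (Dg p)"
      unfolding Prop_def by blast
    have Mx: "\<not> (if x = 2*p+1 then P1 p else if x = 2*p+2 then P2 p else P3 p)" using M[OF p x] eG by simp
    have My: "(if y = 2*p+1 then P1 p else if y = 2*p+2 then P2 p else P3 p)" using M[OF p y] nb by simp
    have "(x = 2*p+2 \<and> P1 p \<and> \<not> P2 p) \<or> (x = 2*p+3 \<and> P2 p \<and> \<not> P3 p)"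
      using x y xy Mx My m21[OF p] m32[OF p] by auto
    then show "e \<in> {insert (r,2*p+2) (Dg p) | p. p < L \<and> P1 p \<and> \<not> P2 p}
     \<union> {insert (r,2*p+3) (Dg p) | p. p < L \<and> P2 p \<and> \<not> P3 p}" using e p by auto
  next
    fix e assume "e \<in> {insert (r,2*p+2) (Dg p) | p. p < L \<and> P1 p \<and> \<not> P2 p}
     \<union> {insert (r,2*p+3) (Dg p) | p. p < L \<and> P2 p \<and> \<not> P3 p}"
    then show "e \<in> Prop (St R EV)"
    proof (elim UnE CollectE exE conjE)
      fix p assume e: "e = insert (r,2*p+2) (Dg p)" and p: "p < L" and h: "P1 p" "\<not> P2 p"
      have "insert (r,2*p+1) (Dg p) \<in> St R EV" using M[of p "2*p+1"] p h by simp
      moreover have "insert (r,2*p+2) (Dg p) \<notin> St R EV" using M[of p "2*p+2"] p h by simp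
      ultimately show "e \<in> Prop (St R EV)" unfolding Prop_def using e p
        by (intro CollectI exI[of _ p] exI[of _ "2*p+2"] exI[of _ "2*p+1"]) auto
    next
      fix p assume e: "e = insert (r,2*p+3) (Dg p)" and p: "p < L" and h: "P2 p" "\<not> P3 p"
      have "insert (r,2*p+2) (Dg p) \<in> St R EV" using M[of p "2*p+2"] p h by simp
      moreover have "insert (r,2*p+3) (Dg p) \<notin> St R EV" using M[of p "2*p+3"] p h by simp
      ultimately show "e \<in> Prop (St R EV)" unfolding Prop_def using e p
        by (intro CollectI exI[of _ p] exI[of _ "2*p+3"] exI[of _ "2*p+2"]) auto
    qed
  qed
qed

end

context seqsetup
begin

definition "X c (s::nat) = B \<union> c ` {0..s}"
definition "Rq q s p = (if p < q then X (run p) T1 else if p = q then X (run p) (min T1 s) else B)"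
definition "EVq q s = {p. p < L \<and> (p < q \<or> (p = q \<and> T1 < s))}"
definition "Gq q s = St (Rq q s) (EVq q s)"
definition "Eq q s = (if s \<le> T1 then ph (2*q+1) (run q s) else insert (r,2*q+2) (Dg q))"

lemma V1_eq: "V1 = Astar k (r-1) \<union> {(r,1)}" by (simp add: V1_def A0_def)

lemma gr_run: "goodrun r V1 B T1 (run p)"
  using gra grb unfolding V1_eq B_def run_def by simp

lemma X_new: "s < T1 \<Longrightarrow> new1 (X (run p) s) = {run p (Suc s)}"
  using gr_run[of p] unfolding goodrun_def new1_def X_def by blast
lemma X_stat: "new1 (X (run p) T1) = {}"
  using gr_run[of p] unfolding goodrun_def new1_def X_def by blast
lemma run0_notB: "run p 0 \<notin> B"
  using gr_run[of p] unfolding goodrun_def by blast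
lemma runT1_notB: "run p T1 \<notin> B"
  using run0_notB[of "Suc p"] run_next by simp
lemma B_stat: "new1 B = {}"
  using statB unfolding new1_def V1_eq B_def by simp
lemma X_mono: "s \<le> s' \<Longrightarrow> X c s \<subseteq> X c s'"
  unfolding X_def by (intro Un_mono order_refl image_mono) auto
lemma runT1_in: "s \<le> T1 \<Longrightarrow> run p T1 \<in> X (run p) s \<longleftrightarrow> s = T1"
proof
  assume s: "s \<le> T1" and m: "run p T1 \<in> X (run p) s"
  show "s = T1"
  proof (rule ccontr)
    assume "s \<noteq> T1"
    then have "s \<le> T1 - 1" using s by simp
    then have "run p T1 \<in> X (run p) (T1 - 1)" using m X_mono by blast
    moreover have "run p (Suc (T1 - 1)) \<in> new1 (X (run p) (T1 - 1))" using X_new[of "T1 - 1" p] T1pos by simp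
    ultimately show False using T1pos unfolding new1_def by simp
  qed
qed (auto simp: X_def)
lemma run0_in: "run p 0 \<in> X (run p) s" by (simp add: X_def)

lemma st_inst: "stctx r k T1 H1 a (Rq q s) (EVq q s)"
proof (intro stctx.intro seqsetup_axioms stctx_axioms.intro)
  fix p assume "p \<le> L" then show "B \<subseteq> Rq q s p" by (auto simp: Rq_def X_def)
next
  fix p g assume p: "p \<le> L" and g: "g \<in> Rq q s p"
  then have "g \<in> B \<or> (\<exists>i\<le>T1. g = run p i)" by (auto simp: Rq_def X_def split: if_splits)
  then show "g \<subseteq> V1 \<and> card g = r" using B_V1 run_V by blast
next
  fix p g assume p: "p \<le> L" and g: "g \<in> Rq q s p" and n: "(r,1) \<notin> g"
  then have "g \<in> B \<or> (\<exists>i\<le>T1. g = run p i)" by (auto simp: Rq_def X_def split: if_splits)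
  then show "g \<in> B" using run_V n by blast
next
  show "EVq q s \<subseteq> {..<L}" by (auto simp: EVq_def)
qed

lemma new1_Rq: "new1 (Rq q s p) = (if p = q \<and> s < T1 then {run q (Suc s)} else {})"
  by (auto simp: Rq_def X_new X_stat B_stat min_def)

lemma new_Gq: "new (Gq q s) = (if q \<le> L \<and> s < T1 then {ph (2*q+1) (run q (Suc s))} else {})
   \<union> (if q < L \<and> s = T1 then {insert (r,2*q+2) (Dg q)} else {})
   \<union> (if q < L \<and> T1 < s then {insert (r,2*q+3) (Dg q)} else {})"
proof -
  interpret S: stctx r k T1 H1 a "Rq q s" "EVq q s" by (rule st_inst)
  have U: "(\<Union>p\<le>L. ph (2*p+1) ` new1 (Rq q s p)) = (if q \<le> L \<and> s < T1 then {ph (2*q+1) (run q (Suc s))} else {})"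
    unfolding new1_Rq by (auto split: if_splits)
  have P: "Prop (Gq q s) = {insert (r,2*p+2) (Dg p) | p. p < L \<and> (p < q \<or> (p = q \<and> T1 \<le> s)) \<and> \<not> (p < q \<or> (p = q \<and> T1 < s))}
     \<union> {insert (r,2*p+3) (Dg p) | p. p < L \<and> (p < q \<or> (p = q \<and> T1 < s)) \<and> \<not> (Suc p \<le> q)}"
    unfolding Gq_def
  proof (rule S.Prop_eval)
    fix p assume "p < L"
    show "run p T1 \<in> Rq q s p \<longleftrightarrow> (p < q \<or> (p = q \<and> T1 \<le> s))"
      using runT1_in[of T1 p] runT1_in[of "min T1 s" p] runT1_notB[of p] by (auto simp: Rq_def min_def)
    show "p \<in> EVq q s \<longleftrightarrow> (p < q \<or> (p = q \<and> T1 < s))" using \<open>p < L\<close> by (simp add: EVq_def)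
    show "run (Suc p) 0 \<in> Rq q s (Suc p) \<longleftrightarrow> Suc p \<le> q"
      using run0_in run0_notB by (auto simp: Rq_def)
  qed auto
  have P2: "Prop (Gq q s) = (if q < L \<and> s = T1 then {insert (r,2*q+2) (Dg q)} else {})
   \<union> (if q < L \<and> T1 < s then {insert (r,2*q+3) (Dg q)} else {})"
    unfolding P by auto
  show ?thesis unfolding Gq_def S.decomp U using P2 by (simp add: Gq_def)
qed

end

context seqsetup
begin

lemma St_insR: "p \<le> L \<Longrightarrow> St (R(p := insert g (R p))) EV = insert (ph (2*p+1) g) (St R EV)"
proof -
  assume p: "p \<le> L"
  have "(\<Union>p'\<le>L. ph (2*p'+1) ` (R(p := insert g (R p))) p') = insert (ph (2*p+1) g) (\<Union>p'\<le>L. ph (2*p'+1) ` R p')"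
  proof (intro equalityI subsetI)
    fix x assume "x \<in> (\<Union>p'\<le>L. ph (2*p'+1) ` (R(p := insert g (R p))) p')"
    then obtain p' where "p' \<le> L" "x \<in> ph (2*p'+1) ` (R(p := insert g (R p))) p'" by blast
    then show "x \<in> insert (ph (2*p+1) g) (\<Union>p'\<le>L. ph (2*p'+1) ` R p')"
    proof (cases "p' = p")
      case True
      then have "x = ph (2*p+1) g \<or> x \<in> ph (2*p+1) ` R p"
        using \<open>x \<in> ph (2*p'+1) ` (R(p := insert g (R p))) p'\<close> by simp
      then show ?thesis
      proof (elim disjE)
        assume "x = ph (2*p+1) g" then show ?thesis by simp
      next
        assume "x \<in> ph (2*p+1) ` R p"
        moreover have "p \<in> {..L}" using \<open>p' \<le> L\<close> True by simp
        ultimately have "x \<in> (\<Union>p'\<le>L. ph (2*p'+1) ` R p')" by (rule UN_I[rotated])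
        then show ?thesis by simp
      qed
    next
      case False
      then have "x \<in> ph (2*p'+1) ` R p'" using \<open>x \<in> ph (2*p'+1) ` (R(p := insert g (R p))) p'\<close> by simp
      moreover have "p' \<in> {..L}" using \<open>p' \<le> L\<close> by simp
      ultimately have "x \<in> (\<Union>p'\<le>L. ph (2*p'+1) ` R p')" by (rule UN_I[rotated])
      then show ?thesis by simp
    qed
  next
    fix x assume "x \<in> insert (ph (2*p+1) g) (\<Union>p'\<le>L. ph (2*p'+1) ` R p')"
    then consider "x = ph (2*p+1) g" | p' where "p' \<le> L" "x \<in> ph (2*p'+1) ` R p'" by blast
    then show "x \<in> (\<Union>p'\<le>L. ph (2*p'+1) ` (R(p := insert g (R p))) p')"
    proof cases
      case 1
      have "x \<in> ph (2*p+1) ` (R(p := insert g (R p))) p" using 1 by simp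
      moreover have "p \<in> {..L}" using p by simp
      ultimately show ?thesis by (rule UN_I[rotated])
    next
      case (2 p')
      have "x \<in> ph (2*p'+1) ` (R(p := insert g (R p))) p'" using 2 by (cases "p' = p") simp_all
      moreover have "p' \<in> {..L}" using 2(1) by simp
      ultimately show ?thesis by (rule UN_I[rotated])
    qed
  qed
  then show ?thesis unfolding St_def by auto
qed

lemma St_insEV: "St R (insert p EV) = insert (insert (r,2*p+2) (Dg p)) (St R EV)"
  unfolding St_def by auto

lemma X_Suc: "X c (Suc s) = insert (c (Suc s)) (X c s)"
  unfolding X_def by (auto simp: atLeastAtMostSuc_conv)

lemma step1: "q \<le> L \<Longrightarrow> s < T1 \<Longrightarrow> Gq q (Suc s) = insert (ph (2*q+1) (run q (Suc s))) (Gq q s)"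
proof -
  assume q: "q \<le> L" and s: "s < T1"
  have m: "min T1 (Suc s) = Suc s" "min T1 s = s" using s by auto
  have R: "Rq q (Suc s) = (Rq q s)(q := insert (run q (Suc s)) (Rq q s q))"
    unfolding fun_eq_iff Rq_def m by (simp add: X_Suc)
  have E: "EVq q (Suc s) = EVq q s" using s by (auto simp: EVq_def)
  show ?thesis unfolding Gq_def R E using St_insR[OF q] by simp
qed

lemma step2: "q < L \<Longrightarrow> Gq q (Suc T1) = insert (insert (r,2*q+2) (Dg q)) (Gq q T1)"
proof -
  assume q: "q < L"
  have R: "Rq q (Suc T1) = Rq q T1" by (intro ext) (simp add: Rq_def)
  have E: "EVq q (Suc T1) = insert q (EVq q T1)" using q by (auto simp: EVq_def)
  show ?thesis unfolding Gq_def R E St_insEV by simp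
qed

lemma ph_run0: "ph (2*Suc q+1) (run (Suc q) 0) = insert (r,2*q+3) (Dg q)"
proof -
  have e: "2*Suc q+1 = 2*q+3" by simp
  show ?thesis unfolding e run_next by (rule ph_run)
qed

lemma step3: "q < L \<Longrightarrow> Gq (Suc q) 0 = insert (insert (r,2*q+3) (Dg q)) (Gq q (Suc T1))"
proof -
  assume q: "q < L"
  have R: "Rq (Suc q) 0 = (Rq q (Suc T1))(Suc q := insert (run (Suc q) 0) (Rq q (Suc T1) (Suc q)))"
    by (intro ext) (simp add: Rq_def X_def)
  have E: "EVq (Suc q) 0 = EVq q (Suc T1)" by (auto simp: EVq_def)
  have q': "Suc q \<le> L" using q by simp
  show ?thesis unfolding Gq_def R E St_insR[OF q'] ph_run0 by simp
qed

definition "nn = T1 + 2"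
definition "Gt t = Gq (t div nn) (t mod nn)"
definition "Et t = Eq (t div nn) (t mod nn)"
definition "Tt = L * nn + T1"

lemma nnpos: "0 < nn" by (simp add: nn_def)

lemma lex_aux:
  fixes q s n LL T :: nat
  assumes "s < n" "q*n + s < LL*n + T" "T < n"
  shows "q < LL \<or> (q = LL \<and> s < T)"
proof (cases "q < LL")
  case False
  show ?thesis
  proof (cases "q = LL")
    case True
    then show ?thesis using assms(2) by simp
  next
    case False
    then have "Suc LL \<le> q" using \<open>\<not> q < LL\<close> by simp
    then have "Suc LL * n \<le> q * n" by (rule mult_le_mono1)
    then have "LL * n + n \<le> q * n" by simp
    then show ?thesis using assms by linarith
  qed
qed simp

lemma lt_Tt: "t < Tt \<Longrightarrow> t div nn < L \<or> (t div nn = L \<and> t mod nn < T1)"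
proof -
  assume t: "t < Tt"
  have "(t div nn) * nn + t mod nn < L * nn + T1" using t unfolding Tt_def by simp
  moreover have "t mod nn < nn" using nnpos by simp
  moreover have "T1 < nn" by (simp add: nn_def)
  ultimately show ?thesis using lex_aux by blast
qed

lemma Tt_div: "Tt div nn = L" "Tt mod nn = T1"
proof -
  have T: "Tt = T1 + L * nn" by (simp add: Tt_def)
  have t: "T1 < nn" by (simp add: nn_def)
  have nz: "nn \<noteq> 0" using nnpos by simp
  have "(T1 + L*nn) div nn = L + T1 div nn" by (rule div_mult_self1[OF nz])
  then show "Tt div nn = L" unfolding T using div_less[OF t] by simp
  have "(T1 + L*nn) mod nn = T1 mod nn" by (rule mod_mult_self1)
  then show "Tt mod nn = T1" unfolding T using mod_less[OF t] by simp
qed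

lemma new_split: "boot_step r V G = G \<union> new G"
  unfolding new_def using boot_step_mono[of G r V] by blast

lemma tstep: "t < Tt \<Longrightarrow> new (Gt t) = {Et (Suc t)} \<and> Gt (Suc t) = insert (Et (Suc t)) (Gt t)"
proof -
  assume t: "t < Tt"
  define q where "q = t div nn"
  define s where "s = t mod nn"
  have sn: "s < nn" using nnpos s_def by simp
  have qs: "q < L \<or> (q = L \<and> s < T1)" using lt_Tt[OF t] q_def s_def by simp
  have T1n: "Suc (Suc T1) = nn" by (simp add: nn_def)
  have G0: "Gt t = Gq q s" "Et (Suc t) = Eq (Suc t div nn) (Suc t mod nn)" "Gt (Suc t) = Gq (Suc t div nn) (Suc t mod nn)"
    unfolding Gt_def Et_def q_def s_def by simp_all
  consider (a) "s < T1" | (b) "s = T1" | (c) "s = Suc T1" using sn T1n by linarith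
  then show ?thesis
  proof cases
    case a
    have d: "Suc t div nn = q" "Suc t mod nn = Suc s"
      using a T1n unfolding q_def s_def by (simp_all add: div_Suc mod_Suc)
    have qL: "q \<le> L" using qs by auto
    have e1: "Eq q (Suc s) = ph (2*q+1) (run q (Suc s))" using a by (simp add: Eq_def)
    have n1: "new (Gq q s) = {ph (2*q+1) (run q (Suc s))}" using a qL unfolding new_Gq by simp
    show ?thesis unfolding G0 d e1 n1 step1[OF qL a] by simp
  next
    case b
    have d: "Suc t div nn = q" "Suc t mod nn = Suc T1"
      using b T1n unfolding q_def s_def by (simp_all add: div_Suc mod_Suc)
    have qL: "q < L" using qs b by auto
    have e1: "Eq q (Suc T1) = insert (r,2*q+2) (Dg q)" by (simp add: Eq_def)
    have n1: "new (Gq q T1) = {insert (r,2*q+2) (Dg q)}" using qL unfolding new_Gq by simp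
    show ?thesis unfolding G0 d e1 n1 b step2[OF qL] by simp
  next
    case c
    have d: "Suc t div nn = Suc q" "Suc t mod nn = 0"
      using c T1n unfolding q_def s_def by (simp_all add: div_Suc mod_Suc)
    have qL: "q < L" using qs c by auto
    have e1: "Eq (Suc q) 0 = insert (r,2*q+3) (Dg q)" using ph_run0 by (simp add: Eq_def)
    have n1: "new (Gq q (Suc T1)) = {insert (r,2*q+3) (Dg q)}" using qL unfolding new_Gq by simp
    show ?thesis unfolding G0 d e1 n1 c step3[OF qL] by simp
  qed
qed

lemma tfinal: "new (Gt Tt) = {}"
proof -
  have "Gt Tt = Gq L T1" unfolding Gt_def Tt_div by (rule refl)
  moreover have "new (Gq L T1) = {}" unfolding new_Gq by simp
  ultimately show ?thesis by simp
qed

lemma boot_Gt: "t \<le> Tt \<Longrightarrow> boot r V (Gq 0 0) t = Gt t"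
proof (induction t)
  case 0
  then show ?case by (simp add: boot_def Gt_def)
next
  case (Suc t)
  then have "boot r V (Gq 0 0) t = Gt t" by simp
  then have "boot r V (Gq 0 0) (Suc t) = boot_step r V (Gt t)" by (simp add: boot_def)
  also have "\<dots> = Gt (Suc t)"
  proof -
    have lt: "t < Tt" using Suc.prems by simp
    have h: "new (Gt t) = {Et (Suc t)}" "Gt (Suc t) = insert (Et (Suc t)) (Gt t)" using tstep[OF lt] by blast+
    have "boot_step r V (Gt t) = Gt t \<union> new (Gt t)" by (rule new_split)
    then show ?thesis unfolding h by blast
  qed
  finally show ?case .
qed

lemma Et_step: "1 \<le> i \<Longrightarrow> i \<le> Tt \<Longrightarrow> new (Gt (i - 1)) = {Et i} \<and> Gt i = insert (Et i) (Gt (i-1))"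
proof -
  assume i: "1 \<le> i" "i \<le> Tt"
  have i1: "Suc (i-1) = i" using i by simp
  have lt: "i - 1 < Tt" using i by simp
  show ?thesis using tstep[OF lt, unfolded i1] .
qed

lemma FW1: "1 \<le> i \<Longrightarrow> i \<le> Tt \<Longrightarrow> boot r V (Gq 0 0) i - boot r V (Gq 0 0) (i - 1) = {Et i}"
proof -
  assume i: "1 \<le> i" "i \<le> Tt"
  have b1: "boot r V (Gq 0 0) i = Gt i" using boot_Gt i by blast
  have b2: "boot r V (Gq 0 0) (i-1) = Gt (i-1)" using boot_Gt[of "i-1"] i by linarith
  have h: "new (Gt (i-1)) = {Et i}" "Gt i = insert (Et i) (Gt (i-1))" using Et_step[OF i] by blast+
  have "Et i \<notin> Gt (i-1)" using h(1) unfolding new_def by blast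
  then show ?thesis unfolding b1 b2 h(2) by blast
qed

lemma FW2: "boot r V (Gq 0 0) (Suc Tt) = boot r V (Gq 0 0) Tt"
proof -
  have "boot r V (Gq 0 0) (Suc Tt) = boot_step r V (Gt Tt)" using boot_Gt[of Tt] by (simp add: boot_def)
  moreover have "boot_step r V (Gt Tt) = Gt Tt \<union> new (Gt Tt)" by (rule new_split)
  ultimately show ?thesis using tfinal boot_Gt[of Tt] by simp
qed

end

context seqsetup
begin

lemma stat0: "new (St (\<lambda>_. B) {}) = {}"
proof -
  interpret S: stctx r k T1 H1 a "\<lambda>_. B" "{}"
    by (intro stctx.intro seqsetup_axioms stctx_axioms.intro) (use B_V1 in \<open>auto simp: B_def\<close>)
  have P: "Prop (St (\<lambda>_. B) {}) = {insert (r,2*p+2) (Dg p) | p. p < L \<and> False \<and> \<not> False}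
     \<union> {insert (r,2*p+3) (Dg p) | p. p < L \<and> False \<and> \<not> False}"
  proof (rule S.Prop_eval)
    fix p assume "p < L"
    show "run p T1 \<in> B \<longleftrightarrow> False" using runT1_notB by simp
    show "p \<in> {} \<longleftrightarrow> False" by simp
    show "run (Suc p) 0 \<in> B \<longleftrightarrow> False" using run0_notB by simp
  qed auto
  show ?thesis unfolding S.decomp P using B_stat by simp
qed

lemma Gq00: "Gq 0 0 = St (\<lambda>p. if p = 0 then H1 else B) {}"
proof -
  have "X (run 0) 0 = H1" using a0H by (auto simp: X_def run_def B_def)
  then have "Rq 0 0 = (\<lambda>p. if p = 0 then H1 else B)" by (intro ext) (simp add: Rq_def)
  moreover have "EVq 0 0 = {}" by (simp add: EVq_def)
  ultimately show ?thesis by (simp add: Gq_def)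
qed

lemma Et_V: "i \<le> Tt \<Longrightarrow> Et i \<subseteq> V \<and> card (Et i) = r"
proof (cases "i = 0")
  case True
  have "Et 0 = a 0" by (simp add: Et_def Eq_def run_def ph_1')
  then show ?thesis using True aV[of 0] V1_V by (auto simp: V1_def A0_def)
next
  case False
  assume "i \<le> Tt"
  then have "Et i \<in> new (Gt (i - 1))" using Et_step[of i] False by simp
  then show ?thesis unfolding new_def new_char by blast
qed

lemma Et_init: "i \<le> T1 \<Longrightarrow> Et i = a i"
proof -
  assume i: "i \<le> T1"
  then have "i < nn" by (simp add: nn_def)
  then have "i div nn = 0" "i mod nn = i" by simp_all
  then show ?thesis using i by (simp add: Et_def Eq_def run_def ph_1')
qed

lemma L_even: "even L" by (simp add: L_def)

lemma Et_last: "Et Tt = ph (2*L+1) (a T1)"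
  by (simp add: Et_def Tt_div Eq_def run_def L_even)

lemma a0_not_ph: "1 \<le> p \<Longrightarrow> g \<subseteq> V1 \<Longrightarrow> a 0 \<noteq> ph (2*p+1) g"
proof
  assume p: "1 \<le> p" and g: "g \<subseteq> V1" and e: "a 0 = ph (2*p+1) g"
  have "(r,1) \<in> a 0" using aV[of 0] by simp
  then have "(r,1) \<in> ph (2*p+1) g" using e by simp
  then have "1 = 2*p+1" using ph_top[OF g] by blast
  then show False using p by simp
qed

lemma a0_not_Gad: "a 0 \<notin> Gad"
proof
  assume "a 0 \<in> Gad"
  then obtain p where "p < L" "a 0 \<in> gad p" unfolding Gad_def by blast
  then have "(r,2*p+2) \<in> a 0" using gad_props(3) by blast
  moreover have "a 0 \<subseteq> V1" using aV[of 0] by (simp add: V1_def A0_def)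
  ultimately show False using top_notA0 by (auto simp: V1_mem)
qed

lemma H_form: "Gq 0 0 = Gad \<union> H1 \<union> (\<Union>p\<in>{1..L}. ph (2*p+1) ` B)"
proof -
  have "(\<Union>p\<le>L. ph (2*p+1) ` (if p = 0 then H1 else B)) = H1 \<union> (\<Union>p\<in>{1..L}. ph (2*p+1) ` B)"
  proof (intro equalityI subsetI)
    fix x assume "x \<in> (\<Union>p\<le>L. ph (2*p+1) ` (if p = 0 then H1 else B))"
    then obtain p where p: "p \<le> L" "x \<in> ph (2*p+1) ` (if p = 0 then H1 else B)" by blast
    show "x \<in> H1 \<union> (\<Union>p\<in>{1..L}. ph (2*p+1) ` B)"
    proof (cases "p = 0")
      case True then show ?thesis using p by (simp add: ph_1')
    next
      case False
      then have "x \<in> ph (2*p+1) ` B" "p \<in> {1..L}" using p by auto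
      then show ?thesis by blast
    qed
  next
    fix x assume "x \<in> H1 \<union> (\<Union>p\<in>{1..L}. ph (2*p+1) ` B)"
    then consider "x \<in> H1" | p where "p \<in> {1..L}" "x \<in> ph (2*p+1) ` B" by blast
    then show "x \<in> (\<Union>p\<le>L. ph (2*p+1) ` (if p = 0 then H1 else B))"
    proof cases
      case 1
      then have "x \<in> ph (2*0+1) ` (if (0::nat) = 0 then H1 else B)" by (simp add: ph_1')
      moreover have "(0::nat) \<in> {..L}" by simp
      ultimately show ?thesis by (rule UN_I[rotated])
    next
      case (2 p)
      then have "x \<in> ph (2*p+1) ` (if p = 0 then H1 else B)" by auto
      moreover have "p \<in> {..L}" using 2 by simp
      ultimately show ?thesis by (rule UN_I[rotated])
    qed
  qed
  then show ?thesis unfolding Gq00 St_def by (simp add: Un_assoc)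
qed

lemma H_minus: "Gq 0 0 - {a 0} = St (\<lambda>_. B) {}"
proof -
  have "(\<Union>p\<le>L. ph (2*p+1) ` B) = B \<union> (\<Union>p\<in>{1..L}. ph (2*p+1) ` B)"
  proof (intro equalityI subsetI)
    fix x assume "x \<in> (\<Union>p\<le>L. ph (2*p+1) ` B)"
    then obtain p where p: "p \<le> L" "x \<in> ph (2*p+1) ` B" by blast
    show "x \<in> B \<union> (\<Union>p\<in>{1..L}. ph (2*p+1) ` B)"
    proof (cases "p = 0")
      case True then show ?thesis using p by (simp add: ph_1')
    next
      case False
      then have "p \<in> {1..L}" using p by auto
      then show ?thesis using p(2) by blast
    qed
  next
    fix x assume "x \<in> B \<union> (\<Union>p\<in>{1..L}. ph (2*p+1) ` B)"
    then consider "x \<in> B" | p where "p \<in> {1..L}" "x \<in> ph (2*p+1) ` B" by blast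
    then show "x \<in> (\<Union>p\<le>L. ph (2*p+1) ` B)"
    proof cases
      case 1
      then have "x \<in> ph (2*0+1) ` B" by (simp add: ph_1')
      moreover have "(0::nat) \<in> {..L}" by simp
      ultimately show ?thesis by (rule UN_I[rotated])
    next
      case (2 p)
      moreover have "p \<in> {..L}" using 2 by simp
      ultimately show ?thesis by blast
    qed
  qed
  then have S: "St (\<lambda>_. B) {} = Gad \<union> B \<union> (\<Union>p\<in>{1..L}. ph (2*p+1) ` B)"
    unfolding St_def by (simp add: Un_assoc)
  have n1: "a 0 \<notin> (\<Union>p\<in>{1..L}. ph (2*p+1) ` B)"
  proof
    assume "a 0 \<in> (\<Union>p\<in>{1..L}. ph (2*p+1) ` B)"
    then obtain p g where "p \<in> {1..L}" "g \<in> B" "a 0 = ph (2*p+1) g" by blast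
    then show False using a0_not_ph[of p g] B_V1[of g] by simp
  qed
  have n2: "a 0 \<notin> B" by (simp add: B_def)
  have h: "H1 - {a 0} = B" by (simp add: B_def)
  show ?thesis unfolding H_form S using n1 n2 a0_not_Gad
    by (simp add: Un_Diff Diff_insert0 h)
qed

lemma FW3: "boot_step r V (Gq 0 0 - {a 0}) = Gq 0 0 - {a 0}"
  using stat0 new_split[of "Gq 0 0 - {a 0}"] unfolding H_minus by simp

lemma H_rg: "f \<in> Gq 0 0 \<Longrightarrow> f \<subseteq> V \<and> card f = r"
proof -
  interpret S: stctx r k T1 H1 a "Rq 0 0" "EVq 0 0" by (rule st_inst)
  assume "f \<in> Gq 0 0"
  then show ?thesis using S.St_V unfolding Gq_def by blast
qed

end

lemma boot_step_Pow: "\<forall>e\<in>G. e \<subseteq> V \<Longrightarrow> \<forall>e\<in>boot_step r V G. e \<subseteq> V"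
  unfolding boot_step_def by auto

lemma img_inj_sub:
  assumes "inj_on f V" "X \<subseteq> V" "Y \<subseteq> V" "f ` X = f ` Y" shows "X = Y"
  using assms by (metis inj_on_image_eq_iff)

lemma boot_step_img_sub:
  fixes f :: "'a \<Rightarrow> 'a"
  assumes inj: "inj_on f V" and sur: "f ` V = V" and GV: "\<forall>e\<in>G. e \<subseteq> V"
  shows "(\<lambda>e. f ` e) ` boot_step r V G \<subseteq> boot_step r V ((\<lambda>e. f ` e) ` G)"
proof
  fix x assume "x \<in> (\<lambda>e. f ` e) ` boot_step r V G"
  then obtain e where x: "x = f ` e" and e: "e \<in> boot_step r V G" by blast
  show "x \<in> boot_step r V ((\<lambda>e. f ` e) ` G)"
  proof (cases "e \<in> G")
    case True
    then have "x \<in> (\<lambda>e. f ` e) ` G" using x by blast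
    then show ?thesis using boot_step_mono by blast
  next
    case False
    then have "e \<in> boot_step r V G - G" using e by blast
    then obtain w where eV: "e \<subseteq> V" and ce: "card e = r" and wV: "w \<in> V" and we: "w \<notin> e"
      and allf: "\<And>g. g \<subseteq> insert w e \<Longrightarrow> card g = r \<Longrightarrow> g \<noteq> e \<Longrightarrow> g \<in> G"
      unfolding new_char by blast
    have xV: "x \<subseteq> V" using x eV sur by blast
    have cx: "card x = r" using x ce inj eV by (metis card_image inj_on_subset)
    have xG: "x \<notin> (\<lambda>e. f ` e) ` G"
    proof
      assume "x \<in> (\<lambda>e. f ` e) ` G"
      then obtain g where g: "g \<in> G" "x = f ` g" by blast
      then have "e = g" using img_inj_sub[OF inj eV] GV x by metis
      then show False using g False by simp
    qed
    have fw: "f w \<in> V - x"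
    proof -
      have "f w \<in> V" using wV sur by blast
      moreover have "f w \<notin> x"
      proof
        assume "f w \<in> x"
        then obtain u where "u \<in> e" "f w = f u" using x by blast
        then have "w = u" using inj wV eV unfolding inj_on_def by blast
        then show False using we \<open>u \<in> e\<close> by simp
      qed
      ultimately show ?thesis by blast
    qed
    have "\<forall>g'. g' \<subseteq> insert (f w) x \<and> card g' = r \<and> g' \<noteq> x \<longrightarrow> g' \<in> (\<lambda>e. f ` e) ` G"
    proof (intro allI impI)
      fix g' assume g': "g' \<subseteq> insert (f w) x \<and> card g' = r \<and> g' \<noteq> x"
      have "g' \<subseteq> f ` (insert w e)" using g' x by auto
      then obtain g where g: "g \<subseteq> insert w e" "g' = f ` g" by (meson subset_imageE)
      have gV: "g \<subseteq> V" using g(1) wV eV by blast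
      have "card g = r" using g g' inj gV by (metis card_image inj_on_subset)
      moreover have "g \<noteq> e" using g g' x by blast
      ultimately have "g \<in> G" using allf g(1) by blast
      then show "g' \<in> (\<lambda>e. f ` e) ` G" using g(2) by blast
    qed
    then have "x \<in> boot_step r V ((\<lambda>e. f ` e) ` G) - (\<lambda>e. f ` e) ` G"
      unfolding new_char using xV cx xG fw by blast
    then show ?thesis by blast
  qed
qed

lemma boot_step_img:
  fixes f :: "'a \<Rightarrow> 'a"
  assumes inj: "inj_on f V" and sur: "f ` V = V" and GV: "\<forall>e\<in>G. e \<subseteq> V"
  shows "boot_step r V ((\<lambda>e. f ` e) ` G) = (\<lambda>e. f ` e) ` boot_step r V G"
proof
  show "(\<lambda>e. f ` e) ` boot_step r V G \<subseteq> boot_step r V ((\<lambda>e. f ` e) ` G)"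
    by (rule boot_step_img_sub[OF inj sur GV])
next
  define h where "h = inv_into V f"
  have hinj: "inj_on h V" unfolding h_def using sur by (metis inj_on_inv_into order_refl)
  have hsur: "h ` V = V" unfolding h_def using inj sur by (metis inv_into_image_cancel order_refl)
  have hf: "h (f u) = u" if "u \<in> V" for u unfolding h_def using inj that by simp
  have fh: "f (h u) = u" if "u \<in> V" for u unfolding h_def using sur that by (simp add: f_inv_into_f)
  have FV: "\<forall>e\<in>(\<lambda>e. f ` e) ` G. e \<subseteq> V" using GV sur by blast
  have HF: "(\<lambda>e. h ` e) ` (\<lambda>e. f ` e) ` G = G"
  proof -
    have "h ` f ` e = e" if "e \<in> G" for e
      using hf GV that unfolding image_image by (simp add: subset_iff)
    then show ?thesis unfolding image_image by simp
  qed
  have "(\<lambda>e. h ` e) ` boot_step r V ((\<lambda>e. f ` e) ` G) \<subseteq> boot_step r V G"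
    using boot_step_img_sub[OF hinj hsur FV] HF by simp
  then have "(\<lambda>e. f ` e) ` (\<lambda>e. h ` e) ` boot_step r V ((\<lambda>e. f ` e) ` G) \<subseteq> (\<lambda>e. f ` e) ` boot_step r V G"
    by (rule image_mono)
  moreover have "(\<lambda>e. f ` e) ` (\<lambda>e. h ` e) ` boot_step r V ((\<lambda>e. f ` e) ` G) = boot_step r V ((\<lambda>e. f ` e) ` G)"
  proof -
    have BV: "\<forall>e\<in>boot_step r V ((\<lambda>e. f ` e) ` G). e \<subseteq> V" using boot_step_Pow[OF FV] .
    have "f ` h ` e = e" if "e \<in> boot_step r V ((\<lambda>e. f ` e) ` G)" for e
      using fh BV that unfolding image_image by (simp add: subset_iff)
    then show ?thesis unfolding image_image by simp
  qed
  ultimately show "boot_step r V ((\<lambda>e. f ` e) ` G) \<subseteq> (\<lambda>e. f ` e) ` boot_step r V G" by simp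
qed

lemma boot_img:
  fixes f :: "'a \<Rightarrow> 'a"
  assumes inj: "inj_on f V" and sur: "f ` V = V" and GV: "\<forall>e\<in>G. e \<subseteq> V"
  shows "boot r V ((\<lambda>e. f ` e) ` G) i = (\<lambda>e. f ` e) ` boot r V G i \<and> (\<forall>e\<in>boot r V G i. e \<subseteq> V)"
proof (induction i)
  case 0
  then show ?case using GV by (simp add: boot_def)
next
  case (Suc i)
  then show ?case using boot_step_img[OF inj sur, of "boot r V G i" r] boot_step_Pow[of "boot r V G i" V r]
    by (simp add: boot_def)
qed

lemma img_diff:
  assumes "inj_on f V" "\<forall>e\<in>A. e \<subseteq> V" "\<forall>e\<in>B. e \<subseteq> V"
  shows "(\<lambda>e. f ` e) ` A - (\<lambda>e. f ` e) ` B = (\<lambda>e. f ` e) ` (A - B)"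
proof -
  have "inj_on (\<lambda>e. f ` e) (A \<union> B)"
    unfolding inj_on_def using assms by (metis UnE img_inj_sub)
  then have "(\<lambda>e. f ` e) ` (A - B) = (\<lambda>e. f ` e) ` A - (\<lambda>e. f ` e) ` B"
    by (rule inj_on_image_set_diff) auto
  then show ?thesis by simp
qed


lemma goodrun_cong:
  assumes "\<And>i. i \<le> T1 \<Longrightarrow> c i = d i" "goodrun r W B T1 c"
  shows "goodrun r W B T1 d"
proof -
  have im: "c ` {0..s} = d ` {0..s}" if "s \<le> T1" for s using assms(1) that by (intro image_cong) auto
  show ?thesis using assms(2) unfolding goodrun_def
  proof (intro conjI allI impI)
    assume g: "(\<forall>s<T1. boot_step r W (B \<union> c ` {0..s}) - (B \<union> c ` {0..s}) = {c (Suc s)}) \<and>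
      boot_step r W (B \<union> c ` {0..T1}) = B \<union> c ` {0..T1} \<and> c 0 \<notin> B"
    fix s assume s: "s < T1"
    show "boot_step r W (B \<union> d ` {0..s}) - (B \<union> d ` {0..s}) = {d (Suc s)}"
    proof -
      have h: "boot_step r W (B \<union> c ` {0..s}) - (B \<union> c ` {0..s}) = {c (Suc s)}" using g s by blast
      have i1: "c ` {0..s} = d ` {0..s}" using im s by simp
      have i2: "c (Suc s) = d (Suc s)" using assms(1) s by simp
      show ?thesis using h unfolding i1 i2 .
    qed
  next
    assume g: "(\<forall>s<T1. boot_step r W (B \<union> c ` {0..s}) - (B \<union> c ` {0..s}) = {c (Suc s)}) \<and>
      boot_step r W (B \<union> c ` {0..T1}) = B \<union> c ` {0..T1} \<and> c 0 \<notin> B"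
    show "boot_step r W (B \<union> d ` {0..T1}) = B \<union> d ` {0..T1}" using g im[of T1] by simp
    show "d 0 \<notin> B" using g assms(1)[of 0] by simp
  qed
qed

context seqsetup
begin

lemma aT1_notB: "a T1 \<notin> B" using run0_notB[of 1] by (simp add: run_def)

lemma rev_setup: "seqsetup r k T1 (B \<union> {a T1}) (\<lambda>i. a (T1 - i))"
proof (unfold_locales)
  show "3 \<le> r" "2 \<le> k" "1 \<le> T1" using r3 k2 T1pos by auto
  fix f assume "f \<in> B \<union> {a T1}"
  then show "f \<subseteq> Astar k (r-1) \<union> {(r,1)} \<and> card f = r" using B_V1 aV[of T1] by (auto simp: V1_def A0_def)
next
  fix i assume "i \<le> T1"
  then show "a (T1 - i) \<subseteq> Astar k (r-1) \<union> {(r,1)} \<and> card (a (T1 - i)) = r \<and> (r,1) \<in> a (T1 - i)"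
    using aV[of "T1 - i"] by simp
next
  show "(\<lambda>i. a (T1 - i)) 0 \<in> B \<union> {a T1}" by simp
  have e: "B \<union> {a T1} - {(\<lambda>i. a (T1 - i)) 0} = H1 - {a 0}" using aT1_notB by (auto simp: B_def)
  show "boot_step r (Astar k (r-1) \<union> {(r,1)}) (B \<union> {a T1} - {(\<lambda>i. a (T1 - i)) 0}) = B \<union> {a T1} - {(\<lambda>i. a (T1 - i)) 0}"
    unfolding e by (rule statB)
  show "goodrun r (Astar k (r - 1) \<union> {(r, 1)}) (B \<union> {a T1} - {(\<lambda>i. a (T1 - i)) 0}) T1 (\<lambda>i. a (T1 - i))"
    unfolding e by (rule grb)
  show "goodrun r (Astar k (r - 1) \<union> {(r, 1)}) (B \<union> {a T1} - {(\<lambda>i. a (T1 - i)) 0}) T1 (\<lambda>i. (\<lambda>i. a (T1 - i)) (T1 - i))"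
    unfolding e by (rule goodrun_cong[OF _ gra]) simp
qed

end

lemma gadget_sym: "gadget r c b a D = gadget r a b c D"
  unfolding gadget_def by (auto simp: insert_commute)

lemma gadget_img:
  assumes inj: "inj_on f U" and abc: "a \<in> U" "b \<in> U" "c \<in> U" and DU: "D \<subseteq> U"
  shows "(\<lambda>e. f ` e) ` gadget r a b c D = gadget r (f a) (f b) (f c) (f ` D)"
proof (intro equalityI subsetI)
  fix x assume "x \<in> (\<lambda>e. f ` e) ` gadget r a b c D"
  then obtain e where x: "x = f ` e" and e: "e \<subseteq> {a,b,c} \<union> D" "card e = r" "\<not> {a,c} \<subseteq> e" "\<not> D \<subseteq> e"
    unfolding gadget_def by blast
  have eU: "e \<subseteq> U" using e(1) abc DU by blast
  have "x \<subseteq> {f a, f b, f c} \<union> f ` D" using x e(1) by blast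
  moreover have "card x = r" using x e(2) inj eU by (metis card_image inj_on_subset)
  moreover have "\<not> {f a, f c} \<subseteq> x"
  proof
    assume "{f a, f c} \<subseteq> x"
    then have "f a \<in> f ` e" "f c \<in> f ` e" using x by auto
    then have "a \<in> e" "c \<in> e" using inj eU abc by (auto simp: inj_on_image_mem_iff)
    then show False using e(3) by blast
  qed
  moreover have "\<not> f ` D \<subseteq> x"
  proof
    assume "f ` D \<subseteq> x"
    have "D \<subseteq> e"
    proof
      fix d assume d: "d \<in> D"
      then have "f d \<in> f ` e" using \<open>f ` D \<subseteq> x\<close> x by blast
      moreover have "d \<in> U" using d DU by blast
      ultimately show "d \<in> e" using inj_on_image_mem_iff[OF inj _ eU] by blast
    qed
    then show False using e(4) by blast
  qed
  ultimately show "x \<in> gadget r (f a) (f b) (f c) (f ` D)" unfolding gadget_def by blast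
next
  fix x assume "x \<in> gadget r (f a) (f b) (f c) (f ` D)"
  then have x: "x \<subseteq> {f a, f b, f c} \<union> f ` D" "card x = r" "\<not> {f a, f c} \<subseteq> x" "\<not> f ` D \<subseteq> x"
    unfolding gadget_def by blast+
  have "x \<subseteq> f ` ({a,b,c} \<union> D)" using x(1) by auto
  then obtain e where e: "e \<subseteq> {a,b,c} \<union> D" "x = f ` e" by (meson subset_imageE)
  have eU: "e \<subseteq> U" using e(1) abc DU by blast
  have "card e = r" using x(2) e(2) inj eU by (metis card_image inj_on_subset)
  moreover have "\<not> {a,c} \<subseteq> e" using x(3) e(2) by blast
  moreover have "\<not> D \<subseteq> e" using x(4) e(2) by blast
  ultimately have "e \<in> gadget r a b c D" using e(1) unfolding gadget_def by blast
  then show "x \<in> (\<lambda>e. f ` e) ` gadget r a b c D" using e(2) by blast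
qed

locale revsetup = seqsetup

sublocale revsetup \<subseteq> R: seqsetup r k T1 "B \<union> {a T1}" "\<lambda>i. a (T1 - i)"
  by (rule rev_setup)

context revsetup
begin

definition "rho u = (if fst u = r then (r, 4*k-2 - snd u) else u)"

lemma rho_top: "rho (r,x) = (r, 4*k-2-x)" by (simp add: rho_def)
lemma rho_A0: "u \<in> A0 \<Longrightarrow> rho u = u" using A0_fst by (simp add: rho_def)
lemma rho_img_A0: "D \<subseteq> A0 \<Longrightarrow> rho ` D = D"
  using rho_A0 by (metis (no_types, lifting) image_cong image_ident subsetD)

lemma rho_V: "u \<in> V \<Longrightarrow> rho u \<in> V \<and> rho (rho u) = u"
  using k2 by (cases u) (auto simp: rho_def V_mem)

lemma rho_inj: "inj_on rho V"
  by (metis inj_on_inverseI rho_V)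

lemma rho_sur: "rho ` V = V"
proof
  show "rho ` V \<subseteq> V" using rho_V by blast
  show "V \<subseteq> rho ` V"
  proof
    fix u assume "u \<in> V" then have "u = rho (rho u)" "rho u \<in> V" using rho_V by auto
    then show "u \<in> rho ` V" by blast
  qed
qed

lemma rho_ph: "g \<subseteq> V1 \<Longrightarrow> rho ` ph m g = ph (4*k-2-m) g"
proof -
  assume g: "g \<subseteq> V1"
  have "rho (fm m u) = fm (4*k-2-m) u" if "u \<in> g" for u
  proof (cases "u = (r,1)")
    case True then show ?thesis by (simp add: fm_def rho_top)
  next
    case False
    then have "u \<in> A0" using that g by (auto simp: V1_mem)
    then show ?thesis using False by (simp add: fm_def rho_A0)
  qed
  then show ?thesis unfolding ph_def image_image by (rule image_cong[OF refl])
qed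

lemma Dg_par: "Dg p = (if even p then a T1 - {(r,1)} else a 0 - {(r,1)})"
  by (simp add: Dg_def run_def)

lemma R_Dg: "p < L \<Longrightarrow> R.Dg p = Dg (L - 1 - p)"
proof -
  assume p: "p < L"
  have "even (L - 1 - p) \<longleftrightarrow> odd p" using p L_even by presburger
  then show ?thesis by (simp add: R.Dg_def R.run_def Dg_par)
qed

lemma R_B: "R.B = B"
proof -
  have "R.B = (B \<union> {a T1}) - {a (T1 - 0)}" by (rule R.B_def)
  then show ?thesis using aT1_notB by auto
qed

lemma rho_gad: "p < L \<Longrightarrow> (\<lambda>e. rho ` e) ` R.gad p = gad (L - 1 - p)"
proof -
  assume p: "p < L"
  have abc: "(r,2*p+1) \<in> V" "(r,2*p+2) \<in> V" "(r,2*p+3) \<in> V" using tri_V[OF p] by auto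
  have "Dg (L - 1 - p) \<subseteq> V" using Dg_A0 A0_V by blast
  then have DV: "R.Dg p \<subseteq> V" using R_Dg[OF p] by simp
  have "(\<lambda>e. rho ` e) ` R.gad p = gadget r (rho (r,2*p+1)) (rho (r,2*p+2)) (rho (r,2*p+3)) (rho ` R.Dg p)"
    unfolding R.gad_def by (rule gadget_img[OF rho_inj abc DV])
  also have "rho ` R.Dg p = Dg (L - 1 - p)" using R_Dg[OF p] Dg_A0 rho_img_A0 by simp
  also have "rho (r,2*p+1) = (r, 2*(L-1-p)+3)" using p by (simp add: rho_top L_def)
  also have "rho (r,2*p+2) = (r, 2*(L-1-p)+2)" using p by (simp add: rho_top L_def)
  also have "rho (r,2*p+3) = (r, 2*(L-1-p)+1)" using p by (simp add: rho_top L_def)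
  finally show ?thesis unfolding gad_def using gadget_sym by metis
qed

end

lemma divmod_eq: "(x::nat) = Q * n + S \<Longrightarrow> S < n \<Longrightarrow> x div n = Q \<and> x mod n = S"
proof -
  assume x: "x = Q * n + S" and s: "S < n"
  have n: "n \<noteq> 0" using s by simp
  have "x = S + Q * n" using x by simp
  then show ?thesis using s n by simp
qed

context revsetup
begin

lemma L_ge: "2 \<le> L" using k2 by (simp add: L_def)
lemma four_k: "4*k-2 = 2*L+2" using k2 by (simp add: L_def)

lemma rho_V1: "g \<subseteq> V1 \<Longrightarrow> rho ` g = ph (2*L+1) g"
proof -
  assume g: "g \<subseteq> V1"
  have "rho ` g = rho ` ph 1 g" by (simp add: ph_1 ph_1')
  also have "\<dots> = ph (4*k-2-1) g" by (rule rho_ph[OF g])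
  also have "4*k-2-1 = 2*L+1" using four_k by simp
  finally show ?thesis .
qed

lemma UN_rev: "(\<Union>p\<in>{1..L}. h (L - p)) = (\<Union>p\<in>{..<L}. h p)"
proof (intro equalityI subsetI)
  fix x assume "x \<in> (\<Union>p\<in>{1..L}. h (L - p))"
  then obtain p where "p \<in> {1..L}" "x \<in> h (L - p)" by blast
  moreover have "L - p \<in> {..<L}" using \<open>p \<in> {1..L}\<close> by auto
  ultimately show "x \<in> (\<Union>p\<in>{..<L}. h p)" by blast
next
  fix x assume "x \<in> (\<Union>p\<in>{..<L}. h p)"
  then obtain p where p: "p < L" "x \<in> h p" by blast
  then have "x \<in> h (L - (L - p))" by simp
  moreover have "L - p \<in> {1..L}" using p by auto
  ultimately show "x \<in> (\<Union>p\<in>{1..L}. h (L - p))" by blast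
qed

lemma UN_rev2: "(\<Union>p\<in>{..<L}. h (L - 1 - p)) = (\<Union>p\<in>{..<L}. h p)"
proof (intro equalityI subsetI)
  fix x assume "x \<in> (\<Union>p\<in>{..<L}. h (L - 1 - p))"
  then obtain p where "p < L" "x \<in> h (L - 1 - p)" by blast
  moreover have "L - 1 - p \<in> {..<L}" using \<open>p < L\<close> by auto
  ultimately show "x \<in> (\<Union>p\<in>{..<L}. h p)" by blast
next
  fix x assume "x \<in> (\<Union>p\<in>{..<L}. h p)"
  then obtain p where p: "p < L" "x \<in> h p" by blast
  then have "x \<in> h (L - 1 - (L - 1 - p))" by simp
  moreover have "L - 1 - p \<in> {..<L}" using p by auto
  ultimately show "x \<in> (\<Union>p\<in>{..<L}. h (L - 1 - p))" by blast
qed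

lemma UN_split: "(\<Union>p\<le>L. h p) = h L \<union> (\<Union>p\<in>{..<L}. h p)"
proof -
  have "{..L} = insert L {..<L}" by auto
  then show ?thesis by simp
qed

lemma rho_Gad: "(\<lambda>e. rho ` e) ` R.Gad = Gad"
proof -
  have "(\<lambda>e. rho ` e) ` R.Gad = (\<Union>p\<in>{..<L}. (\<lambda>e. rho ` e) ` R.gad p)"
    unfolding R.Gad_def by (simp add: image_UN)
  also have "\<dots> = (\<Union>p\<in>{..<L}. gad (L - 1 - p))" using rho_gad by simp
  also have "\<dots> = (\<Union>p\<in>{..<L}. gad p)" by (rule UN_rev2)
  finally show ?thesis unfolding Gad_def by simp
qed

lemma rho_phB: "(\<lambda>e. rho ` e) ` (\<Union>p\<in>{1..L}. ph (2*p+1) ` B) = (\<Union>p\<in>{..<L}. ph (2*p+1) ` B)"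
proof -
  have "(\<lambda>e. rho ` e) ` (\<Union>p\<in>{1..L}. ph (2*p+1) ` B) = (\<Union>p\<in>{1..L}. (\<lambda>g. rho ` ph (2*p+1) g) ` B)"
    by (simp add: image_UN image_image)
  also have "\<dots> = (\<Union>p\<in>{1..L}. (\<lambda>g. ph (2*(L-p)+1) g) ` B)"
  proof (rule SUP_cong[OF refl])
    fix p assume p: "p \<in> {1..L}"
    have e: "4*k-2-(2*p+1) = 2*(L-p)+1" using p four_k by auto
    show "(\<lambda>g. rho ` ph (2*p+1) g) ` B = (\<lambda>g. ph (2*(L-p)+1) g) ` B"
      using rho_ph B_V1 e by (intro image_cong[OF refl]) simp
  qed
  also have "\<dots> = (\<Union>p\<in>{..<L}. ph (2*p+1) ` B)"
    using UN_rev[of "\<lambda>q. ph (2*q+1) ` B"] by simp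
  finally show ?thesis .
qed

lemma St0_form: "St (\<lambda>_. B) {} = Gad \<union> (\<Union>p\<le>L. ph (2*p+1) ` B)"
  unfolding St_def by simp

lemma L1: "(\<lambda>e. rho ` e) ` R.Gq 0 0 = St (\<lambda>_. B) {} \<union> {ph (2*L+1) (a T1)}"
proof -
  have RH: "R.Gq 0 0 = R.Gad \<union> (B \<union> {a T1}) \<union> (\<Union>p\<in>{1..L}. ph (2*p+1) ` B)"
    using R.H_form R_B by simp
  have aV1: "a T1 \<subseteq> V1" using aV[of T1] by (simp add: V1_def A0_def)
  have "(\<lambda>e. rho ` e) ` (B \<union> {a T1}) = ph (2*L+1) ` B \<union> {ph (2*L+1) (a T1)}"
  proof -
    have "(\<lambda>e. rho ` e) ` B = ph (2*L+1) ` B" using rho_V1 B_V1 by (intro image_cong[OF refl]) simp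
    moreover have "rho ` a T1 = ph (2*L+1) (a T1)" by (rule rho_V1[OF aV1])
    ultimately show ?thesis by (simp add: image_Un)
  qed
  then have "(\<lambda>e. rho ` e) ` R.Gq 0 0 = Gad \<union> (ph (2*L+1) ` B \<union> {ph (2*L+1) (a T1)}) \<union> (\<Union>p\<in>{..<L}. ph (2*p+1) ` B)"
    unfolding RH image_Un rho_Gad rho_phB by simp
  also have "\<dots> = Gad \<union> (\<Union>p\<le>L. ph (2*p+1) ` B) \<union> {ph (2*L+1) (a T1)}"
    unfolding UN_split[of "\<lambda>p. ph (2*p+1) ` B"] by auto
  finally show ?thesis unfolding St0_form .
qed

lemma L3: "Gq 0 0 \<union> {Et Tt} - {Et 0} = St (\<lambda>_. B) {} \<union> {ph (2*L+1) (a T1)}"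
proof -
  have e0: "Et 0 = a 0" using Et_init[of 0] by simp
  have ne: "ph (2*L+1) (a T1) \<noteq> a 0"
    using a0_not_ph[of L "a T1"] L_ge aV[of T1] by (auto simp: V1_def A0_def)
  have "Gq 0 0 \<union> {Et Tt} - {Et 0} = (Gq 0 0 - {a 0}) \<union> {ph (2*L+1) (a T1)}"
    unfolding e0 Et_last using ne by auto
  then show ?thesis unfolding H_minus .
qed

lemma le_Tt_lex: "i \<le> Tt \<Longrightarrow> i div nn < L \<or> (i div nn = L \<and> i mod nn \<le> T1)"
proof -
  assume i: "i \<le> Tt"
  have "(i div nn) * nn + i mod nn < L * nn + Suc T1" using i unfolding Tt_def by simp
  moreover have "i mod nn < nn" using nnpos by simp
  moreover have "Suc T1 < nn" by (simp add: nn_def)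
  ultimately have "i div nn < L \<or> (i div nn = L \<and> i mod nn < Suc T1)" using lex_aux by blast
  then show ?thesis by auto
qed

lemma L2: "i \<le> Tt \<Longrightarrow> rho ` R.Et i = Et (Tt - i)"
proof -
  assume i: "i \<le> Tt"
  define q where "q = i div nn"
  define s where "s = i mod nn"
  have iqs: "i = q * nn + s" unfolding q_def s_def by simp
  have sn: "s < nn" unfolding s_def using nnpos by simp
  have lex: "q < L \<or> (q = L \<and> s \<le> T1)" using le_Tt_lex[OF i] q_def s_def by simp
  have RE: "R.Et i = R.Eq q s" unfolding R.Et_def q_def s_def by simp
  have T1n: "nn = Suc (Suc T1)" by (simp add: nn_def)
  show ?thesis
  proof (cases "s \<le> T1")
    case True
    have qL: "q \<le> L" using lex by auto
    have "Tt - i = (L - q) * nn + (T1 - s)"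
    proof -
      have "q * nn \<le> L * nn" using qL by (rule mult_le_mono1)
      moreover have "(L - q) * nn = L * nn - q * nn" by (simp add: diff_mult_distrib)
      ultimately show ?thesis using iqs True unfolding Tt_def by simp
    qed
    moreover have "T1 - s < nn" by (simp add: nn_def)
    ultimately have d: "(Tt - i) div nn = L - q" "(Tt - i) mod nn = T1 - s" using divmod_eq by blast+
    have E: "Et (Tt - i) = ph (2*(L-q)+1) (run (L-q) (T1-s))" unfolding Et_def d by (simp add: Eq_def)
    have rr: "R.run q s = run (L-q) (T1-s)"
    proof -
      have "even (L - q) \<longleftrightarrow> even q" using qL L_even by presburger
      then show ?thesis using True by (simp add: R.run_def run_def)
    qed
    have rV: "R.run q s \<subseteq> V1" using R.run_V[OF True] by simp
    have "rho ` R.Et i = rho ` ph (2*q+1) (R.run q s)" unfolding RE using True by (simp add: R.Eq_def)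
    also have "\<dots> = ph (4*k-2-(2*q+1)) (R.run q s)" by (rule rho_ph[OF rV])
    also have "4*k-2-(2*q+1) = 2*(L-q)+1" using four_k qL by simp
    finally show ?thesis unfolding E rr .
  next
    case False
    then have sT: "s = Suc T1" using sn T1n by simp
    have qL: "q < L" using lex False by auto
    have "Tt - i = (L - 1 - q) * nn + Suc T1"
    proof -
      have "Suc q * nn \<le> L * nn" using qL by (intro mult_le_mono1) simp
      moreover have "(L - 1 - q) * nn = L * nn - Suc q * nn" by (simp add: diff_mult_distrib)
      ultimately show ?thesis using iqs sT T1n unfolding Tt_def by simp
    qed
    moreover have "Suc T1 < nn" by (simp add: nn_def)
    ultimately have d: "(Tt - i) div nn = L - 1 - q" "(Tt - i) mod nn = Suc T1" using divmod_eq by blast+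
    have E: "Et (Tt - i) = insert (r, 2*(L-1-q)+2) (Dg (L-1-q))" unfolding Et_def d by (simp add: Eq_def)
    have "rho ` R.Et i = rho ` insert (r,2*q+2) (R.Dg q)" unfolding RE using sT by (simp add: R.Eq_def)
    also have "\<dots> = insert (r, 4*k-2-(2*q+2)) (Dg (L-1-q))"
      using R_Dg[OF qL] Dg_A0 rho_img_A0 by (simp add: rho_top)
    also have "4*k-2-(2*q+2) = 2*(L-1-q)+2" using four_k qL by simp
    finally show ?thesis unfolding E .
  qed
qed

lemma REV: "1 \<le> i \<Longrightarrow> i \<le> Tt \<Longrightarrow>
  boot r V (Gq 0 0 \<union> {Et Tt} - {Et 0}) i - boot r V (Gq 0 0 \<union> {Et Tt} - {Et 0}) (i - 1) = {Et (Tt - i)}"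
proof -
  assume i: "1 \<le> i" "i \<le> Tt"
  have H: "Gq 0 0 \<union> {Et Tt} - {Et 0} = (\<lambda>e. rho ` e) ` R.Gq 0 0" unfolding L3 L1 ..
  have GV: "\<forall>e\<in>R.Gq 0 0. e \<subseteq> V" using R.H_rg by simp
  have b1: "boot r V ((\<lambda>e. rho ` e) ` R.Gq 0 0) j = (\<lambda>e. rho ` e) ` boot r V (R.Gq 0 0) j"
    "\<forall>e\<in>boot r V (R.Gq 0 0) j. e \<subseteq> V" for j
    using boot_img[OF rho_inj rho_sur GV, of r j] by auto
  have "boot r V (R.Gq 0 0) i - boot r V (R.Gq 0 0) (i - 1) = {R.Et i}" using R.FW1[OF i] by simp
  then have "(\<lambda>e. rho ` e) ` boot r V (R.Gq 0 0) i - (\<lambda>e. rho ` e) ` boot r V (R.Gq 0 0) (i - 1) = {rho ` R.Et i}"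
    using img_diff[OF rho_inj b1(2) b1(2)] by simp
  then show ?thesis unfolding H b1(1) L2[OF i(2)] .
qed

end

lemma boot_Suc: "boot r W G (Suc i) = boot_step r W (boot r W G i)"
  by (simp add: boot_def)

lemma boot_mono0: "G \<subseteq> boot r W G i"
proof (induction i)
  case 0 then show ?case by (simp add: boot_def)
next
  case (Suc i) then show ?case using boot_step_mono[of "boot r W G i" r W] boot_Suc by blast
qed

lemma boot_chain:
  assumes "\<forall>i\<in>{1..T}. boot r W G i - boot r W G (i - 1) = {c i}"
  shows "s \<le> T \<Longrightarrow> boot r W G s = G \<union> c ` {1..s}"
proof (induction s)
  case 0 then show ?case by (simp add: boot_def)
next
  case (Suc s)
  have IH: "boot r W G s = G \<union> c ` {1..s}" using Suc by simp
  have "Suc s \<in> {1..T}" using Suc.prems by simp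
  then have "boot r W G (Suc s) - boot r W G (Suc s - 1) = {c (Suc s)}" using assms by blast
  then have d: "boot r W G (Suc s) - boot r W G s = {c (Suc s)}" by simp
  have m: "boot r W G s \<subseteq> boot r W G (Suc s)" unfolding boot_Suc by (rule boot_step_mono)
  have "boot r W G (Suc s) = insert (c (Suc s)) (boot r W G s)" using d m by blast
  also have "\<dots> = G \<union> c ` {1..Suc s}" unfolding IH by (auto simp: atLeastAtMostSuc_conv)
  finally show ?case .
qed

lemma T_eq: "2 \<le> k \<Longrightarrow> (2 * k - 1) * T1 + 4 * (k - 1) = (2*k - 2) * (T1 + 2) + (T1::nat)"
proof -
  assume "2 \<le> k"
  then obtain j where j: "k = Suc j" by (cases k) auto
  show ?thesis unfolding j by (simp add: algebra_simps)
qed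

context seqsetup
begin

lemma Hodd_eq: "(\<Union>j\<in>{2..2 * k - 1}. replace_vertex (r,1) (r, 2 * j - 1) (H1 - {a 0})) = (\<Union>p\<in>{1..L}. ph (2*p+1) ` B)"
proof -
  have rv: "replace_vertex (r,1) (r, m) G = ph m ` G" for m G
    unfolding replace_vertex_def ph_def fm_def by simp
  show ?thesis
  proof (intro equalityI subsetI)
    fix x assume "x \<in> (\<Union>j\<in>{2..2 * k - 1}. replace_vertex (r,1) (r, 2 * j - 1) (H1 - {a 0}))"
    then obtain j where j: "j \<in> {2..2*k-1}" "x \<in> ph (2*j-1) ` B" unfolding rv B_def by blast
    have "2*j-1 = 2*(j-1)+1" "j - 1 \<in> {1..L}" using j(1) by (auto simp: L_def)
    then show "x \<in> (\<Union>p\<in>{1..L}. ph (2*p+1) ` B)" using j(2) by auto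
  next
    fix x assume "x \<in> (\<Union>p\<in>{1..L}. ph (2*p+1) ` B)"
    then obtain p where p: "p \<in> {1..L}" "x \<in> ph (2*p+1) ` B" by blast
    have "2*(p+1)-1 = 2*p+1" "p + 1 \<in> {2..2*k-1}" using p(1) by (auto simp: L_def)
    then have "x \<in> replace_vertex (r,1) (r, 2 * (p+1) - 1) (H1 - {a 0})" using p(2) unfolding rv B_def by simp
    then show "x \<in> (\<Union>j\<in>{2..2 * k - 1}. replace_vertex (r,1) (r, 2 * j - 1) (H1 - {a 0}))"
      using \<open>p + 1 \<in> {2..2*k-1}\<close> by blast
  qed
qed

lemma Hev_eq: "(\<Union>j\<in>{1..k - 1}. gadget r (r, 4 * j - 3) (r, 4 * j - 2) (r, 4 * j - 1) (a T1 - {(r,1)})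
    \<union> gadget r (r, 4 * j - 1) (r, 4 * j) (r, 4 * j + 1) (a 0 - {(r,1)})) = Gad"
proof -
  have g1: "gadget r (r, 4 * j - 3) (r, 4 * j - 2) (r, 4 * j - 1) (a T1 - {(r,1)}) = gad (2*j-2)" if "1 \<le> j" for j
  proof -
    have "even (2*j-2)" by simp
    then have D: "Dg (2*j-2) = a T1 - {(r,1)}" by (simp add: Dg_def run_def)
    have e: "2*(2*j-2)+1 = 4*j-3" "2*(2*j-2)+2 = 4*j-2" "2*(2*j-2)+3 = 4*j-1" using that by auto
    show ?thesis unfolding gad_def D e by (rule refl)
  qed
  have g2: "gadget r (r, 4 * j - 1) (r, 4 * j) (r, 4 * j + 1) (a 0 - {(r,1)}) = gad (2*j-1)" if "1 \<le> j" for j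
  proof -
    have "odd (2*j-1)" using that by presburger
    then have D: "Dg (2*j-1) = a 0 - {(r,1)}" by (simp add: Dg_def run_def)
    have e: "2*(2*j-1)+1 = 4*j-1" "2*(2*j-1)+2 = 4*j" "2*(2*j-1)+3 = 4*j+1" using that by auto
    show ?thesis unfolding gad_def D e by (rule refl)
  qed
  show ?thesis
  proof (intro equalityI subsetI)
    fix x assume "x \<in> (\<Union>j\<in>{1..k - 1}. gadget r (r, 4 * j - 3) (r, 4 * j - 2) (r, 4 * j - 1) (a T1 - {(r,1)})
      \<union> gadget r (r, 4 * j - 1) (r, 4 * j) (r, 4 * j + 1) (a 0 - {(r,1)}))"
    then obtain j where j: "j \<in> {1..k-1}" "x \<in> gad (2*j-2) \<union> gad (2*j-1)" using g1 g2 by fastforce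
    have "2*j-2 < L" "2*j-1 < L" using j(1) by (auto simp: L_def)
    then show "x \<in> Gad" using j(2) unfolding Gad_def by blast
  next
    fix x assume "x \<in> Gad"
    then obtain p where p: "p < L" "x \<in> gad p" unfolding Gad_def by blast
    show "x \<in> (\<Union>j\<in>{1..k - 1}. gadget r (r, 4 * j - 3) (r, 4 * j - 2) (r, 4 * j - 1) (a T1 - {(r,1)})
      \<union> gadget r (r, 4 * j - 1) (r, 4 * j) (r, 4 * j + 1) (a 0 - {(r,1)}))"
    proof (cases "even p")
      case True
      define j where "j = p div 2 + 1"
      have jj: "j \<in> {1..k-1}" "p = 2*j-2" using p(1) True by (auto simp: j_def L_def)
      then have "x \<in> gadget r (r, 4 * j - 3) (r, 4 * j - 2) (r, 4 * j - 1) (a T1 - {(r,1)})"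
        using g1 p(2) by simp
      then show ?thesis using jj(1) by blast
    next
      case False
      define j where "j = p div 2 + 1"
      have jj: "j \<in> {1..k-1}" "p = 2*j-1" using p(1) False by (auto simp: j_def L_def)
      then have "x \<in> gadget r (r, 4 * j - 1) (r, 4 * j) (r, 4 * j + 1) (a 0 - {(r,1)})"
        using g2 p(2) by simp
      then show ?thesis using jj(1) by blast
    qed
  qed
qed

end


lemma rev_img: "(\<lambda>i. c (T - i)) ` {0..T} = c ` {0..(T::nat)}"
proof -
  have "(\<lambda>i. T - i) ` {0..T} = {0..T}"
  proof (intro equalityI subsetI)
    fix x assume "x \<in> (\<lambda>i. T - i) ` {0..T}" then show "x \<in> {0..T}" by auto
  next
    fix x assume "x \<in> {0..T}"
    then have "x = T - (T - x)" "T - x \<in> {0..T}" by auto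
    then show "x \<in> (\<lambda>i. T - i) ` {0..T}" by blast
  qed
  then show ?thesis by (metis image_image)
qed

lemma img0: "c ` {0..(s::nat)} = insert (c 0) (c ` {1..s})"
proof -
  have "{0..s} = insert 0 {1..s}" by auto
  then show ?thesis by simp
qed

theorem proposition2p2:
  fixes r k T1 :: nat and H1 :: "vert set set" and es :: "nat \<Rightarrow> vert set"
  assumes "3 \<le> r" and "2 \<le> k" and "2 \<le> T1"
    and "is_rgraph r (Astar k (r - 1) \<union> {vtx r 1}) H1"
    and "sequential k r (Astar k (r - 1) \<union> {vtx r 1}) H1 es T1"
    and "\<forall>i\<le>T1. vtx r 1 \<in> es i"
  shows "let em = (\<lambda>i. es i - {vtx r 1});
             Hodd = (\<lambda>j. replace_vertex (vtx r 1) (vtx r (2 * j - 1)) (H1 - {es 0}));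
             Hev1 = (\<lambda>j. gadget r (vtx r (4 * j - 3)) (vtx r (4 * j - 2)) (vtx r (4 * j - 1)) (em T1));
             Hev2 = (\<lambda>j. gadget r (vtx r (4 * j - 1)) (vtx r (4 * j)) (vtx r (4 * j + 1)) (em 0));
             H = H1 \<union> (\<Union>j\<in>{2..2 * k - 1}. Hodd j) \<union> (\<Union>j\<in>{1..k - 1}. Hev1 j \<union> Hev2 j);
             T = (2 * k - 1) * T1 + 4 * (k - 1)
         in \<exists>es'. (\<forall>i\<le>T1. es' i = es i) \<and> sequential k r (Astar k r) H es' T"
proof -
  define W where "W = Astar k (r - 1) \<union> {(r,1)}"
  have vt: "\<And>j. vtx r j = (r,j)" by (simp add: vtx_def)
  have S: "sequential k r W H1 es T1" using assms(5) unfolding W_def vt .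
  have seq1: "is_rgraph r W H1" using S unfolding sequential_def by (elim conjE) assumption
  have seq2: "\<forall>i\<le>T1. es i \<subseteq> W \<and> card (es i) = r" using S unfolding sequential_def by (elim conjE) assumption
  have seq3: "es 0 \<in> H1" using S unfolding sequential_def by (elim conjE) assumption
  have seq4: "\<forall>i\<in>{1..T1}. boot r W H1 i - boot r W H1 (i - 1) = {es i}"
    using S unfolding sequential_def by (elim conjE) assumption
  have seq5: "boot r W H1 (Suc T1) = boot r W H1 T1" using S unfolding sequential_def by (elim conjE) assumption
  have seq6: "stationary r W (H1 - {es 0})" using S unfolding sequential_def by (elim conjE) assumption
  have seq7: "\<forall>i\<in>{1..T1}. boot r W ((H1 \<union> {es T1}) - {es 0}) i - boot r W ((H1 \<union> {es T1}) - {es 0}) (i - 1) = {es (T1 - i)}"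
    using S unfolding sequential_def by (elim conjE) assumption
  note seq = seq1 seq2 seq3 seq4 seq5 seq6 seq7
  have v1: "\<forall>i\<le>T1. (r,1) \<in> es i" using assms(6) vt by simp
  define B where "B = H1 - {es 0}"
  define b where "b = (\<lambda>i. es (T1 - i))"
  have chF: "boot r W H1 s = H1 \<union> es ` {1..s}" if "s \<le> T1" for s
    using boot_chain[OF seq(4) that] .
  have T1mem: "T1 \<in> {1..T1}" using assms(3) by simp
  have esT1: "es T1 \<notin> H1"
  proof
    assume "es T1 \<in> H1"
    then have "es T1 \<in> boot r W H1 (T1 - 1)" using boot_mono0 by blast
    then show False using seq(4) T1mem by blast
  qed
  have ne: "es T1 \<noteq> es 0" using esT1 seq(3) by auto
  have G': "(H1 \<union> {es T1}) - {es 0} = B \<union> {b 0}" using ne by (auto simp: B_def b_def)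
  have chB: "boot r W (B \<union> {b 0}) s = (B \<union> {b 0}) \<union> b ` {1..s}" if "s \<le> T1" for s
    using boot_chain[OF seq(7)[unfolded G'] that] unfolding b_def .
  have XA: "B \<union> es ` {0..s} = boot r W H1 s" if "s \<le> T1" for s
    using chF[OF that] seq(3) unfolding img0[of es s] B_def by auto
  have XB: "B \<union> b ` {0..s} = boot r W (B \<union> {b 0}) s" if "s \<le> T1" for s
    using chB[OF that] unfolding img0[of b s] by auto
  have XAB: "B \<union> b ` {0..T1} = B \<union> es ` {0..T1}" unfolding b_def rev_img ..
  have gra: "goodrun r W B T1 es"
    unfolding goodrun_def
  proof (intro conjI allI impI)
    fix s assume s: "s < T1"
    have "boot_step r W (B \<union> es ` {0..s}) = boot r W H1 (Suc s)" using XA[of s] s by (simp add: boot_Suc)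
    moreover have "Suc s \<in> {1..T1}" using s by simp
    then have "boot r W H1 (Suc s) - boot r W H1 (Suc s - 1) = {es (Suc s)}" using seq(4) by blast
    then have "boot r W H1 (Suc s) - boot r W H1 s = {es (Suc s)}" by simp
    ultimately show "boot_step r W (B \<union> es ` {0..s}) - (B \<union> es ` {0..s}) = {es (Suc s)}"
      using XA[of s] s by simp
  next
    show "boot_step r W (B \<union> es ` {0..T1}) = B \<union> es ` {0..T1}"
      using XA[of T1] seq(5) by (simp add: boot_Suc)
    show "es 0 \<notin> B" by (simp add: B_def)
  qed
  have grb: "goodrun r W B T1 b"
    unfolding goodrun_def
  proof (intro conjI allI impI)
    fix s assume s: "s < T1"
    have "boot_step r W (B \<union> b ` {0..s}) = boot r W (B \<union> {b 0}) (Suc s)" using XB[of s] s by (simp add: boot_Suc)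
    moreover have "Suc s \<in> {1..T1}" using s by simp
    then have "boot r W (B \<union> {b 0}) (Suc s) - boot r W (B \<union> {b 0}) (Suc s - 1) = {es (T1 - Suc s)}"
      using seq(7)[unfolded G'] by blast
    then have "boot r W (B \<union> {b 0}) (Suc s) - boot r W (B \<union> {b 0}) s = {b (Suc s)}" by (simp add: b_def)
    ultimately show "boot_step r W (B \<union> b ` {0..s}) - (B \<union> b ` {0..s}) = {b (Suc s)}"
      using XB[of s] s by simp
  next
    show "boot_step r W (B \<union> b ` {0..T1}) = B \<union> b ` {0..T1}"
      unfolding XAB using XA[of T1] seq(5) by (simp add: boot_Suc)
    show "b 0 \<notin> B" using esT1 by (simp add: B_def b_def)
  qed
  interpret revsetup r k T1 H1 es
  proof (unfold_locales)
    show "3 \<le> r" "2 \<le> k" "1 \<le> T1" using assms(1,2,3) by auto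
    fix f assume "f \<in> H1"
    then show "f \<subseteq> Astar k (r-1) \<union> {(r,1)} \<and> card f = r" using seq(1) unfolding is_rgraph_def W_def by blast
  next
    fix i assume "i \<le> T1"
    then show "es i \<subseteq> Astar k (r-1) \<union> {(r,1)} \<and> card (es i) = r \<and> (r,1) \<in> es i"
      using seq(2) v1 unfolding W_def by blast
  next
    show "es 0 \<in> H1" by (rule seq(3))
    show "boot_step r (Astar k (r-1) \<union> {(r,1)}) (H1 - {es 0}) = H1 - {es 0}"
      using seq(6) unfolding stationary_def W_def .
    show "goodrun r (Astar k (r-1) \<union> {(r,1)}) (H1 - {es 0}) T1 es" using gra unfolding W_def B_def .
    show "goodrun r (Astar k (r-1) \<union> {(r,1)}) (H1 - {es 0}) T1 (\<lambda>i. es (T1 - i))" using grb unfolding W_def B_def b_def .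
  qed
  have Hs: "H1 \<union> (\<Union>j\<in>{2..2 * k - 1}. replace_vertex (vtx r 1) (vtx r (2 * j - 1)) (H1 - {es 0}))
     \<union> (\<Union>j\<in>{1..k - 1}. gadget r (vtx r (4 * j - 3)) (vtx r (4 * j - 2)) (vtx r (4 * j - 1)) (es T1 - {vtx r 1})
        \<union> gadget r (vtx r (4 * j - 1)) (vtx r (4 * j)) (vtx r (4 * j + 1)) (es 0 - {vtx r 1})) = Gq 0 0"
    unfolding vt Hodd_eq Hev_eq H_form by auto
  have Ts: "(2 * k - 1) * T1 + 4 * (k - 1) = Tt"
    unfolding Tt_def nn_def L_def using T_eq[OF assms(2)] by simp
  have VV: "V = Astar k r" by (simp add: V_def)
  have e0: "Et 0 = es 0" using Et_init[of 0] by simp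
  have main: "\<exists>es'. (\<forall>i\<le>T1. es' i = es i) \<and> sequential k r (Astar k r) (Gq 0 0) es' Tt"
  proof (intro exI conjI)
    show "\<forall>i\<le>T1. Et i = es i" using Et_init by simp
    show "sequential k r (Astar k r) (Gq 0 0) Et Tt"
      unfolding sequential_def
    proof (intro conjI)
      show "3 \<le> r" by (rule assms(1))
      show "Astar k r \<subseteq> Astar k r" by simp
      show "is_rgraph r (Astar k r) (Gq 0 0)" unfolding is_rgraph_def using H_rg VV by blast
      show "\<forall>i\<le>Tt. Et i \<subseteq> Astar k r \<and> card (Et i) = r" using Et_V VV by blast
      show "Et 0 \<in> Gq 0 0" unfolding e0 H_form using seq(3) by blast
      show "\<forall>i\<in>{1..Tt}. boot r (Astar k r) (Gq 0 0) i - boot r (Astar k r) (Gq 0 0) (i - 1) = {Et i}"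
        using FW1 VV by simp
      show "boot r (Astar k r) (Gq 0 0) (Suc Tt) = boot r (Astar k r) (Gq 0 0) Tt" using FW2 VV by simp
      show "stationary r (Astar k r) (Gq 0 0 - {Et 0})" unfolding stationary_def e0 using FW3 VV by simp
      show "\<forall>i\<in>{1..Tt}. boot r (Astar k r) (Gq 0 0 \<union> {Et Tt} - {Et 0}) i
          - boot r (Astar k r) (Gq 0 0 \<union> {Et Tt} - {Et 0}) (i - 1) = {Et (Tt - i)}"
        using REV VV by simp
    qed
  qed
  show ?thesis unfolding Let_def Hs Ts using main .
qed


end
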